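(* Let $k$ be an algebraically closed field and $\Lambda=kQ/I$ ($Q$ finite quiver, $I$ admissible ideal) satisfy condition (C) below with $n$ vertices. Then: (1) for every arrow $\alpha:i\to j$ of $Q^{\circ}$, $e_i(\operatorname{rad}\Lambda)\alpha=\alpha(\operatorname{rad}\Lambda)e_j$; (2) for vertices $i,j$ and $w\in e_i\Lambda e_j$, there exist a unique $a\in k$ and some (not necessarily unique) $l\in e_i(\operatorname{rad}\Lambda)e_i$ with $w=(ae_i+l)w^i_j$ in $\Lambda$; also there exist a unique $a'\in k$ and some $l'\in e_j(\operatorname{rad}\Lambda)e_j$ with $w=w^i_j(a'e_j+l')$; moreover $a=a'$; (3) let $f\in\operatorname{Hom}_\Lambda(P_j,P_i)$ be given by left multiplication by $w=(ae_i+l)w^i_j$ with $a\neq 0$ and $l\in e_i(\operatorname{rad}\Lambda)e_i$, and let $V\subseteq Q_0$. Then $f$ factors through $\bigoplus_{t\in V}P_t$ if and only if the path $w^j_i$ passes through some vertex $t\in V$.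
   Context: Condition (C): (a) the quiver $Q^{\circ}$ obtained from $Q$ by deleting all loops is isomorphic to the quiver with vertices $1,\dots,n$ having exactly one arrow $i\to i+1$ and one arrow $i+1\to i$ for each $1\le i\le n-1$, and no others; (b) for every arrow $x:i\to j$ of $Q$ with $i\ne j$, $x\Lambda e_j=e_i\Lambda e_j=e_i\Lambda x$; (c) for every pair $(i,j)$ of vertices, $w^i_j\ne0$ in $\Lambda$, where $w^i_j$ is the shortest path from $i$ to $j$ in $Q$ (so $w^i_j\in e_i\Lambda e_j$; paths are composed left to right, $\alpha\beta$ = first $\alpha$ then $\beta$). $P_i=e_i\Lambda$ (right modules); a morphism $P_j\to P_i$ "given by $w\in e_i\Lambda e_j$" sends $e_j\lambda\mapsto w\lambda$. A path "passes through" a vertex $t$ if $t$ is one of its vertices, endpoints included. *)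

theory Defs
  imports "HOL-Computational_Algebra.Polynomial"
begin

definition alg_closed :: "'k::field itself \<Rightarrow> bool" where
  "alg_closed _ \<longleftrightarrow> (\<forall>p::'k poly. 0 < degree p \<longrightarrow> (\<exists>x. poly p x = 0))"

text \<open>A path is a pair (v, as): a start vertex v and a list of arrows as (composed left to right);
  (v, []) is the trivial path e_v.\<close>

type_synonym ('v, 'e) qpath = "'v \<times> 'e list"

definition valid_path :: "('e \<Rightarrow> 'v) \<Rightarrow> ('e \<Rightarrow> 'v) \<Rightarrow> ('v, 'e) qpath \<Rightarrow> bool" where
  "valid_path src tgt p \<longleftrightarrow>
     (snd p \<noteq> [] \<longrightarrow> src (hd (snd p)) = fst p) \<and>
     (\<forall>i. Suc i < length (snd p) \<longrightarrow> tgt (snd p ! i) = src (snd p ! Suc i))"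

definition pend :: "('e \<Rightarrow> 'v) \<Rightarrow> ('v, 'e) qpath \<Rightarrow> 'v" where
  "pend tgt p = (if snd p = [] then fst p else tgt (last (snd p)))"

definition plen :: "('v, 'e) qpath \<Rightarrow> nat" where
  "plen p = length (snd p)"

definition pverts :: "('e \<Rightarrow> 'v) \<Rightarrow> ('v, 'e) qpath \<Rightarrow> 'v set" where
  "pverts tgt p = insert (fst p) (tgt ` set (snd p))"

definition pcat :: "('e \<Rightarrow> 'v) \<Rightarrow> ('v, 'e) qpath \<Rightarrow> ('v, 'e) qpath \<Rightarrow> ('v, 'e) qpath option" where
  "pcat tgt p q = (if pend tgt p = fst q then Some (fst p, snd p @ snd q) else None)"

text \<open>The shortest path from i to j in Q (unique under condition (C)).\<close>
definition shortest_path :: "('e \<Rightarrow> 'v) \<Rightarrow> ('e \<Rightarrow> 'v) \<Rightarrow> 'v \<Rightarrow> 'v \<Rightarrow> ('v, 'e) qpath" where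
  "shortest_path src tgt i j = (THE p. valid_path src tgt p \<and> fst p = i \<and> pend tgt p = j \<and>
     (\<forall>q. valid_path src tgt q \<and> fst q = i \<and> pend tgt q = j \<longrightarrow> plen p \<le> plen q))"

definition kQ :: "('e \<Rightarrow> 'v) \<Rightarrow> ('e \<Rightarrow> 'v) \<Rightarrow> (('v, 'e) qpath \<Rightarrow> 'k::field) set" where
  "kQ src tgt = {x. finite {p. x p \<noteq> 0} \<and> (\<forall>p. x p \<noteq> 0 \<longrightarrow> valid_path src tgt p)}"

definition kQ_mult :: "('e \<Rightarrow> 'v) \<Rightarrow> (('v, 'e) qpath \<Rightarrow> 'k::field) \<Rightarrow> (('v, 'e) qpath \<Rightarrow> 'k)
    \<Rightarrow> (('v, 'e) qpath \<Rightarrow> 'k)" where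
  "kQ_mult tgt x y = (\<lambda>r. \<Sum>(p, q) \<in> {(p, q). x p \<noteq> 0 \<and> y q \<noteq> 0 \<and> pcat tgt p q = Some r}. x p * y q)"

definition kQ_one :: "('v, 'e) qpath \<Rightarrow> 'k::field" where
  "kQ_one p = (if snd p = [] then 1 else 0)"

definition pbasis :: "('v, 'e) qpath \<Rightarrow> ('v, 'e) qpath \<Rightarrow> 'k::field" where
  "pbasis p = (\<lambda>q. if q = p then 1 else 0)"

text \<open>R^m: the span of the paths of length at least m (R = arrow ideal).\<close>
definition arrow_ideal_pow :: "('e \<Rightarrow> 'v) \<Rightarrow> ('e \<Rightarrow> 'v) \<Rightarrow> nat \<Rightarrow> (('v, 'e) qpath \<Rightarrow> 'k::field) set" where
  "arrow_ideal_pow src tgt m = {x \<in> kQ src tgt. \<forall>p. x p \<noteq> 0 \<longrightarrow> m \<le> plen p}"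

text \<open>The ring Lambda (type 'a) is presented as kQ/I by a surjective ring homomorphism
  pi from kQ onto Lambda whose kernel I is admissible: R^m \<subseteq> I \<subseteq> R^2 for some m \<ge> 2.\<close>
definition bound_quiver_alg :: "('e::finite \<Rightarrow> 'v::finite) \<Rightarrow> ('e \<Rightarrow> 'v)
    \<Rightarrow> ((('v, 'e) qpath \<Rightarrow> 'k::field) \<Rightarrow> 'a::ring_1) \<Rightarrow> bool" where
  "bound_quiver_alg src tgt \<pi> \<longleftrightarrow>
     (\<forall>x \<in> kQ src tgt. \<forall>y \<in> kQ src tgt. \<pi> (\<lambda>p. x p + y p) = \<pi> x + \<pi> y) \<and>
     (\<forall>x \<in> kQ src tgt. \<forall>y \<in> kQ src tgt. \<pi> (kQ_mult tgt x y) = \<pi> x * \<pi> y) \<and>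
     \<pi> kQ_one = 1 \<and>
     \<pi> ` kQ src tgt = UNIV \<and>
     (\<exists>m \<ge> 2. arrow_ideal_pow src tgt m \<subseteq> {x \<in> kQ src tgt. \<pi> x = 0} \<and>
              {x \<in> kQ src tgt. \<pi> x = 0} \<subseteq> arrow_ideal_pow src tgt 2)"

text \<open>Images in Lambda: idempotent e_v, path classes, scalars c (= c\<cdot>1), shortest paths w^i_j.\<close>
definition ev :: "((('v, 'e) qpath \<Rightarrow> 'k::field) \<Rightarrow> 'a::ring_1) \<Rightarrow> 'v \<Rightarrow> 'a" where
  "ev \<pi> v = \<pi> (pbasis (v, []))"

definition pth :: "((('v, 'e) qpath \<Rightarrow> 'k::field) \<Rightarrow> 'a::ring_1) \<Rightarrow> ('v, 'e) qpath \<Rightarrow> 'a" where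
  "pth \<pi> p = \<pi> (pbasis p)"

definition arr :: "('e \<Rightarrow> 'v) \<Rightarrow> ((('v, 'e) qpath \<Rightarrow> 'k::field) \<Rightarrow> 'a::ring_1) \<Rightarrow> 'e \<Rightarrow> 'a" where
  "arr src \<pi> x = pth \<pi> (src x, [x])"

definition csc :: "((('v, 'e) qpath \<Rightarrow> 'k::field) \<Rightarrow> 'a::ring_1) \<Rightarrow> 'k \<Rightarrow> 'a" where
  "csc \<pi> c = \<pi> (\<lambda>p. c * kQ_one p)"

definition wpath :: "('e \<Rightarrow> 'v) \<Rightarrow> ('e \<Rightarrow> 'v) \<Rightarrow> ((('v, 'e) qpath \<Rightarrow> 'k::field) \<Rightarrow> 'a::ring_1)
    \<Rightarrow> 'v \<Rightarrow> 'v \<Rightarrow> 'a" where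
  "wpath src tgt \<pi> i j = pth \<pi> (shortest_path src tgt i j)"

definition jac_rad :: "'a::ring_1 set" where
  "jac_rad = {r. \<forall>x. \<exists>u. (1 - x * r) * u = 1 \<and> u * (1 - x * r) = 1}"

definition cond_C :: "('e::finite \<Rightarrow> 'v::finite) \<Rightarrow> ('e \<Rightarrow> 'v)
    \<Rightarrow> ((('v, 'e) qpath \<Rightarrow> 'k::field) \<Rightarrow> 'a::ring_1) \<Rightarrow> bool" where
  "cond_C src tgt \<pi> \<longleftrightarrow>
     (\<exists>\<phi> :: 'v \<Rightarrow> nat. bij_betw \<phi> UNIV {1..card (UNIV :: 'v set)} \<and>
        bij_betw (\<lambda>x. (\<phi> (src x), \<phi> (tgt x))) {x. src x \<noteq> tgt x}
          {(a, b). (1 \<le> a \<and> b = a + 1 \<and> b \<le> card (UNIV :: 'v set)) \<or> (1 \<le> b \<and> a = b + 1 \<and> a \<le> card (UNIV :: 'v set))}) \<and>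
     (\<forall>x. src x \<noteq> tgt x \<longrightarrow>
        {arr src \<pi> x * l * ev \<pi> (tgt x) | l. True} = {ev \<pi> (src x) * l * ev \<pi> (tgt x) | l. True} \<and>
        {ev \<pi> (src x) * l * ev \<pi> (tgt x) | l. True} = {ev \<pi> (src x) * l * arr src \<pi> x | l. True}) \<and>
     (\<forall>i j. wpath src tgt \<pi> i j \<noteq> 0)"

text \<open>P_t = e_t Lambda, as a right Lambda-module.\<close>
definition Pmod :: "((('v, 'e) qpath \<Rightarrow> 'k::field) \<Rightarrow> 'a::ring_1) \<Rightarrow> 'v \<Rightarrow> 'a set" where
  "Pmod \<pi> t = {ev \<pi> t * x | x. True}"

text \<open>The direct sum of the P_t, t \<in> V (V finite, as 'v is finite), as tuples.\<close>
definition DSum :: "((('v, 'e) qpath \<Rightarrow> 'k::field) \<Rightarrow> 'a::ring_1) \<Rightarrow> 'v set \<Rightarrow> ('v \<Rightarrow> 'a) set" where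
  "DSum \<pi> V = {\<phi>. \<forall>t. (t \<in> V \<longrightarrow> \<phi> t \<in> Pmod \<pi> t) \<and> (t \<notin> V \<longrightarrow> \<phi> t = 0)}"

definition factors_through :: "((('v, 'e) qpath \<Rightarrow> 'k::field) \<Rightarrow> 'a::ring_1) \<Rightarrow> ('a \<Rightarrow> 'a)
    \<Rightarrow> 'v \<Rightarrow> 'v \<Rightarrow> 'v set \<Rightarrow> bool" where
  "factors_through \<pi> f j i V \<longleftrightarrow>
     (\<exists>(h :: 'a \<Rightarrow> 'v \<Rightarrow> 'a) (g :: ('v \<Rightarrow> 'a) \<Rightarrow> 'a).
        (\<forall>x \<in> Pmod \<pi> j. h x \<in> DSum \<pi> V) \<and>
        (\<forall>x \<in> Pmod \<pi> j. \<forall>y \<in> Pmod \<pi> j. h (x + y) = (\<lambda>t. h x t + h y t)) \<and>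
        (\<forall>x \<in> Pmod \<pi> j. \<forall>c. h (x * c) = (\<lambda>t. h x t * c)) \<and>
        (\<forall>\<phi> \<in> DSum \<pi> V. g \<phi> \<in> Pmod \<pi> i) \<and>
        (\<forall>\<phi> \<in> DSum \<pi> V. \<forall>\<psi> \<in> DSum \<pi> V. g (\<lambda>t. \<phi> t + \<psi> t) = g \<phi> + g \<psi>) \<and>
        (\<forall>\<phi> \<in> DSum \<pi> V. \<forall>c. g (\<lambda>t. \<phi> t * c) = g \<phi> * c) \<and>
        (\<forall>x \<in> Pmod \<pi> j. g (h x) = f x))"

end

theory Submission
  imports Defs
begin



lemma valid_nil[simp]: "valid_path src tgt (v, [])"
  by (simp add: valid_path_def)

lemma valid_cons: "valid_path src tgt (v, x # xs) \<longleftrightarrow> src x = v \<and> valid_path src tgt (tgt x, xs)"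
proof
  assume h: "valid_path src tgt (v, x # xs)"
  hence "\<forall>i. Suc i < length (x#xs) \<longrightarrow> tgt ((x#xs) ! i) = src ((x#xs) ! Suc i)" by (simp add: valid_path_def)
  hence a: "xs \<noteq> [] \<Longrightarrow> tgt x = src (hd xs)" and b: "\<forall>i. Suc i < length xs \<longrightarrow> tgt (xs ! i) = src (xs ! Suc i)"
    by (auto simp: hd_conv_nth)
  show "src x = v \<and> valid_path src tgt (tgt x, xs)" using h a b by (simp add: valid_path_def)
next
  assume h: "src x = v \<and> valid_path src tgt (tgt x, xs)"
  have "\<forall>i. Suc i < length (x#xs) \<longrightarrow> tgt ((x#xs) ! i) = src ((x#xs) ! Suc i)"
  proof (intro allI impI)
    fix i assume "Suc i < length (x#xs)"
    thus "tgt ((x#xs) ! i) = src ((x#xs) ! Suc i)" using h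
      by (cases i) (auto simp: valid_path_def hd_conv_nth)
  qed
  thus "valid_path src tgt (v, x # xs)" using h by (simp add: valid_path_def)
qed

lemma pend_nil[simp]: "pend tgt (v, []) = v" by (simp add: pend_def)
lemma pend_cons[simp]: "pend tgt (v, x # xs) = pend tgt (tgt x, xs)" by (simp add: pend_def)
lemma plen_simps[simp]: "plen (v, xs) = length xs" by (simp add: plen_def)
lemma pverts_nil[simp]: "pverts tgt (v, []) = {v}" by (simp add: pverts_def)
lemma pverts_cons[simp]: "pverts tgt (v, x # xs) = insert v (pverts tgt (tgt x, xs))" by (auto simp: pverts_def)

lemma valid_app: "valid_path src tgt (v, xs) \<Longrightarrow> valid_path src tgt (pend tgt (v, xs), ys) \<Longrightarrow> valid_path src tgt (v, xs @ ys)"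
  by (induction xs arbitrary: v) (auto simp: valid_cons)

lemma pend_app: "pend tgt (v, xs @ ys) = pend tgt (pend tgt (v, xs), ys)"
  by (induction xs arbitrary: v) auto


lemma pbasis_ne[simp]: "(pbasis p q \<noteq> (0::'c::field)) = (q = p)"
  by (simp add: pbasis_def)
lemma pbasis_self[simp]: "pbasis p p = 1" by (simp add: pbasis_def)

lemma pcat_triv_left: "(pcat tgt (u,[]) q = Some r) = (fst q = u \<and> r = q)"
  by (cases q) (auto simp: pcat_def)

lemma kQ_mult_triv_left: "kQ_mult tgt (pbasis (u,[])) y = (\<lambda>r. if fst r = u then y r else (0::'c::field))"
proof (rule ext)
  fix r :: "('a,'b) qpath"
  have S: "{(p,q). pbasis (u,[]) p \<noteq> (0::'c::field) \<and> y q \<noteq> 0 \<and> pcat tgt p q = Some r} = (if fst r = u \<and> y r \<noteq> 0 then {((u,[]), r)} else {})"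
  proof (rule set_eqI)
    fix x :: "('a,'b) qpath \<times> ('a,'b) qpath"
    obtain p q where x: "x = (p,q)" by (cases x)
    show "x \<in> {(p,q). pbasis (u,[]) p \<noteq> (0::'c::field) \<and> y q \<noteq> 0 \<and> pcat tgt p q = Some r} \<longleftrightarrow> x \<in> (if fst r = u \<and> y r \<noteq> 0 then {((u,[]), r)} else {})"
      unfolding x using pcat_triv_left[of tgt u q r] pbasis_ne[of "(u,[])" p, where 'c='c]
      by (simp only: mem_Collect_eq case_prod_conv) (auto split: if_splits)
  qed
  show "kQ_mult tgt (pbasis (u,[])) y r = (if fst r = u then y r else 0)"
    unfolding kQ_mult_def S by auto
qed


lemma kQ_mult_single:
  assumes "\<And>p q. (x p \<noteq> 0 \<and> y q \<noteq> 0 \<and> pcat tgt p q = Some r) \<longleftrightarrow> (P \<and> p = pp \<and> q = qq)"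
  shows "kQ_mult tgt x y r = (if P then x pp * y qq else (0::'c::field))"
proof -
  have S: "{(p,q). x p \<noteq> 0 \<and> y q \<noteq> 0 \<and> pcat tgt p q = Some r} = (if P then {(pp,qq)} else {})"
  proof (rule set_eqI)
    fix z :: "('a,'b) qpath \<times> ('a,'b) qpath"
    obtain p q where z: "z = (p,q)" by (cases z)
    show "z \<in> {(p,q). x p \<noteq> 0 \<and> y q \<noteq> 0 \<and> pcat tgt p q = Some r} \<longleftrightarrow> z \<in> (if P then {(pp,qq)} else {})"
      unfolding z using assms[of p q] by (simp only: mem_Collect_eq case_prod_conv) (auto split: if_splits)
  qed
  show ?thesis unfolding kQ_mult_def S by auto
qed

lemma kQ_mult_single':
  assumes "\<And>p q. (x p \<noteq> 0 \<and> y q \<noteq> 0 \<and> pcat tgt p q = Some r) \<longleftrightarrow> (P \<and> p = pp \<and> q = qq)"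
    and "c = (if P then x pp * y qq else (0::'c::field))"
  shows "kQ_mult tgt x y r = c"
  using kQ_mult_single[of x y tgt r P pp qq, OF assms(1)] assms(2) by simp

lemma pcat_triv_right: "(pcat tgt p (u,[]) = Some r) = (pend tgt p = u \<and> r = p)"
  by (cases p) (auto simp: pcat_def)

lemma pcat_iff: "(pcat tgt p q = Some r) = (pend tgt p = fst q \<and> r = (fst p, snd p @ snd q))"
  by (auto simp: pcat_def)

lemma kQ_one_ne: "(c * kQ_one p \<noteq> (0::'c::field)) = (c \<noteq> 0 \<and> snd p = [])"
  by (cases p) (auto simp: kQ_one_def)

lemma kQ_mult_triv_right: fixes y :: "('v,'e) qpath \<Rightarrow> 'c::field" and tgt :: "'e \<Rightarrow> 'v" shows "kQ_mult tgt y (pbasis (u,[])) = (\<lambda>r. if pend tgt r = u then y r else (0::'c::field))"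
proof (rule ext)
  fix r :: "('v,'e) qpath"
  show "kQ_mult tgt y (pbasis (u,[])) r = (if pend tgt r = u then y r else 0)"
    by (rule kQ_mult_single'[where P="pend tgt r = u \<and> y r \<noteq> 0" and pp=r and qq="(u,[]::'e list)"]) (auto simp: pcat_triv_right)
qed

lemma kQ_mult_pbasis: "kQ_mult tgt (pbasis p) (pbasis q) = (if pend tgt p = fst q then pbasis (fst p, snd p @ snd q) else (\<lambda>_. (0::'c::field)))"
proof (rule ext)
  fix r :: "('a,'b) qpath"
  have "kQ_mult tgt (pbasis p) (pbasis q) r = (if pend tgt p = fst q \<and> r = (fst p, snd p @ snd q) then pbasis p p * (pbasis q q::'c) else 0)"
    by (rule kQ_mult_single[where pp=p and qq=q]) (auto simp: pcat_iff)
  thus "kQ_mult tgt (pbasis p) (pbasis q) r = (if pend tgt p = fst q then pbasis (fst p, snd p @ snd q) else (\<lambda>_. (0::'c::field))) r"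
    by (auto simp: pbasis_def)
qed

lemma kQ_mult_scal_left: fixes y :: "('v,'e) qpath \<Rightarrow> 'c::field" and tgt :: "'e \<Rightarrow> 'v" shows "kQ_mult tgt (\<lambda>p. c * kQ_one p) y = (\<lambda>r. c * y r :: 'c::field)"
proof (rule ext)
  fix r :: "('v,'e) qpath"
  show "kQ_mult tgt (\<lambda>p. c * kQ_one p) y r = c * y r"
    apply (rule kQ_mult_single'[where P="c \<noteq> 0 \<and> y r \<noteq> 0" and pp="(fst r,[]::'e list)" and qq=r])
     apply (simp only: kQ_one_ne pcat_iff)
     apply (cases r; auto)
    by (auto simp: kQ_one_def)
qed

lemma kQ_mult_scal_right: fixes y :: "('v,'e) qpath \<Rightarrow> 'c::field" and tgt :: "'e \<Rightarrow> 'v" shows "kQ_mult tgt y (\<lambda>p. c * kQ_one p) = (\<lambda>r. y r * c :: 'c::field)"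
proof (rule ext)
  fix r :: "('v,'e) qpath"
  show "kQ_mult tgt y (\<lambda>p. c * kQ_one p) r = y r * c"
    apply (rule kQ_mult_single'[where P="c \<noteq> 0 \<and> y r \<noteq> 0" and pp=r and qq="(pend tgt r,[]::'e list)"])
     apply (simp only: kQ_one_ne pcat_iff)
     apply (cases r; auto)
    by (auto simp: kQ_one_def)
qed


lemma kQ_mult_support:
  assumes "kQ_mult tgt x y r \<noteq> (0::'c::field)"
  shows "\<exists>p q. x p \<noteq> 0 \<and> y q \<noteq> 0 \<and> pcat tgt p q = Some r"
proof (rule ccontr)
  assume "\<not> ?thesis"
  hence E: "{(p, q). x p \<noteq> 0 \<and> y q \<noteq> 0 \<and> pcat tgt p q = Some r} = {}" by blast
  have "kQ_mult tgt x y r = 0" unfolding kQ_mult_def E by simp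
  thus False using assms by simp
qed

lemma valid_pcat:
  assumes "valid_path src tgt p" "valid_path src tgt q" "pcat tgt p q = Some r"
  shows "valid_path src tgt r"
proof -
  have e: "pend tgt p = fst q" and r: "r = (fst p, snd p @ snd q)" using assms(3) by (auto simp: pcat_iff)
  have "valid_path src tgt (fst p, snd p)" using assms(1) by simp
  moreover have "valid_path src tgt (pend tgt (fst p, snd p), snd q)" using assms(2) e by simp
  ultimately show ?thesis unfolding r by (rule valid_app)
qed

lemma plen_pcat: "pcat tgt p q = Some r \<Longrightarrow> plen r = plen p + plen q"
  by (auto simp: pcat_iff plen_def)

lemma kQ_mult_in:
  assumes "x \<in> kQ src tgt" "y \<in> kQ src tgt"
  shows "kQ_mult tgt x y \<in> (kQ src tgt :: (('v,'e) qpath \<Rightarrow> 'c::field) set)"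
proof -
  have sub: "{r. kQ_mult tgt x y r \<noteq> 0} \<subseteq> (\<lambda>(p,q). (fst p, snd p @ snd q)) ` ({p. x p \<noteq> 0} \<times> {q. y q \<noteq> 0})"
  proof
    fix r assume "r \<in> {r. kQ_mult tgt x y r \<noteq> 0}"
    then obtain p q where pq: "x p \<noteq> 0" "y q \<noteq> 0" "pcat tgt p q = Some r" using kQ_mult_support by blast
    hence "r = (\<lambda>(p,q). (fst p, snd p @ snd q)) (p,q)" by (simp add: pcat_iff)
    moreover have "(p,q) \<in> {p. x p \<noteq> 0} \<times> {q. y q \<noteq> 0}" using pq by simp
    ultimately show "r \<in> (\<lambda>(p,q). (fst p, snd p @ snd q)) ` ({p. x p \<noteq> 0} \<times> {q. y q \<noteq> 0})"
      by (rule image_eqI)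
  qed
  have "finite {p. x p \<noteq> 0}" "finite {q. y q \<noteq> 0}" using assms unfolding kQ_def by blast+
  hence "finite ((\<lambda>(p,q). (fst p, snd p @ snd q)) ` ({p. x p \<noteq> 0} \<times> {q. y q \<noteq> 0}))" by blast
  hence "finite {r. kQ_mult tgt x y r \<noteq> 0}" using sub by (rule finite_subset[rotated])
  moreover have "\<forall>r. kQ_mult tgt x y r \<noteq> 0 \<longrightarrow> valid_path src tgt r"
  proof (intro allI impI)
    fix r assume "kQ_mult tgt x y r \<noteq> 0"
    then obtain p q where pq: "x p \<noteq> 0" "y q \<noteq> 0" "pcat tgt p q = Some r" using kQ_mult_support by blast
    have "valid_path src tgt p" "valid_path src tgt q" using assms pq(1,2) unfolding kQ_def by blast+
    thus "valid_path src tgt r" using pq(3) by (rule valid_pcat)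
  qed
  ultimately show ?thesis unfolding kQ_def by blast
qed

lemma kQ_mult_pow:
  assumes "x \<in> arrow_ideal_pow src tgt a" "y \<in> arrow_ideal_pow src tgt b"
  shows "kQ_mult tgt x y \<in> (arrow_ideal_pow src tgt (a+b) :: (('v,'e) qpath \<Rightarrow> 'c::field) set)"
proof -
  have "kQ_mult tgt x y \<in> kQ src tgt" using assms kQ_mult_in by (auto simp: arrow_ideal_pow_def)
  moreover have "\<forall>r. kQ_mult tgt x y r \<noteq> 0 \<longrightarrow> a + b \<le> plen r"
  proof (intro allI impI)
    fix r assume "kQ_mult tgt x y r \<noteq> 0"
    then obtain p q where "x p \<noteq> 0" "y q \<noteq> 0" "pcat tgt p q = Some r" using kQ_mult_support by blast
    moreover have "a \<le> plen p" "b \<le> plen q" using assms \<open>x p \<noteq> 0\<close> \<open>y q \<noteq> 0\<close> unfolding arrow_ideal_pow_def by blast+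
    ultimately show "a + b \<le> plen r" using plen_pcat[of tgt p q r] by simp
  qed
  ultimately show ?thesis by (simp add: arrow_ideal_pow_def)
qed

lemma kQ_add_in: "x \<in> kQ src tgt \<Longrightarrow> y \<in> kQ src tgt \<Longrightarrow> (\<lambda>p. x p + y p) \<in> (kQ src tgt :: (('v,'e) qpath \<Rightarrow> 'c::field) set)"
proof -
  assume a: "x \<in> kQ src tgt" "y \<in> kQ src tgt"
  have "{p. x p + y p \<noteq> 0} \<subseteq> {p. x p \<noteq> 0} \<union> {p. y p \<noteq> 0}" by auto
  moreover have "finite ({p. x p \<noteq> 0} \<union> {p. y p \<noteq> 0})" using a unfolding kQ_def by blast
  ultimately have "finite {p. x p + y p \<noteq> 0}" by (rule finite_subset)
  moreover have "\<forall>p. x p + y p \<noteq> 0 \<longrightarrow> valid_path src tgt p"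
  proof (intro allI impI)
    fix p assume "x p + y p \<noteq> 0"
    hence "x p \<noteq> 0 \<or> y p \<noteq> 0" by auto
    thus "valid_path src tgt p" using a unfolding kQ_def by blast
  qed
  ultimately show ?thesis unfolding kQ_def by blast
qed

lemma pow_add_in: "x \<in> arrow_ideal_pow src tgt m \<Longrightarrow> y \<in> arrow_ideal_pow src tgt m \<Longrightarrow> (\<lambda>p. x p + y p) \<in> (arrow_ideal_pow src tgt m :: (('v,'e) qpath \<Rightarrow> 'c::field) set)"
proof -
  assume a: "x \<in> arrow_ideal_pow src tgt m" "y \<in> arrow_ideal_pow src tgt m"
  hence "(\<lambda>p. x p + y p) \<in> kQ src tgt" using kQ_add_in unfolding arrow_ideal_pow_def by blast
  moreover have "\<forall>p. x p + y p \<noteq> 0 \<longrightarrow> m \<le> plen p"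
  proof (intro allI impI)
    fix p assume "x p + y p \<noteq> 0"
    hence "x p \<noteq> 0 \<or> y p \<noteq> 0" by auto
    thus "m \<le> plen p" using a unfolding arrow_ideal_pow_def by blast
  qed
  ultimately show ?thesis unfolding arrow_ideal_pow_def by blast
qed

lemma pow_neg_in: "x \<in> arrow_ideal_pow src tgt m \<Longrightarrow> (\<lambda>p. - x p) \<in> (arrow_ideal_pow src tgt m :: (('v,'e) qpath \<Rightarrow> 'c::field) set)"
  unfolding arrow_ideal_pow_def kQ_def by simp

lemma pow_zero_in: "(\<lambda>p. 0) \<in> (arrow_ideal_pow src tgt m :: (('v,'e) qpath \<Rightarrow> 'c::field) set)"
  unfolding arrow_ideal_pow_def kQ_def by simp

lemma pow_0: "arrow_ideal_pow src tgt 0 = kQ src tgt"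
  unfolding arrow_ideal_pow_def by simp

lemma pow_mono: "a \<le> b \<Longrightarrow> arrow_ideal_pow src tgt b \<subseteq> arrow_ideal_pow src tgt a"
  unfolding arrow_ideal_pow_def using order_trans by blast

lemma pbasis_in: "valid_path src tgt p \<Longrightarrow> pbasis p \<in> (kQ src tgt :: (('v,'e) qpath \<Rightarrow> 'c::field) set)"
proof -
  assume "valid_path src tgt p"
  moreover have "{q. pbasis p q \<noteq> (0::'c)} = {p}" by auto
  ultimately show ?thesis unfolding kQ_def by auto
qed

lemma pbasis_pow: "valid_path src tgt p \<Longrightarrow> m \<le> plen p \<Longrightarrow> pbasis p \<in> (arrow_ideal_pow src tgt m :: (('v,'e) qpath \<Rightarrow> 'c::field) set)"
  using pbasis_in[of src tgt p] unfolding arrow_ideal_pow_def by auto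

lemma scal_in: "(\<lambda>p. c * kQ_one p) \<in> (kQ src tgt :: (('v::finite,'e) qpath \<Rightarrow> 'c::field) set)"
proof -
  have "{p::('v,'e) qpath. c * kQ_one p \<noteq> (0::'c)} \<subseteq> (\<lambda>v. (v, [])) ` UNIV"
  proof
    fix p :: "('v,'e) qpath" assume "p \<in> {p. c * kQ_one p \<noteq> (0::'c)}"
    hence "snd p = []" using kQ_one_ne by blast
    hence "p = (fst p, [])" by (metis prod.collapse)
    thus "p \<in> (\<lambda>v. (v, [])) ` UNIV" by blast
  qed
  hence "finite {p::('v,'e) qpath. c * kQ_one p \<noteq> (0::'c)}" by (rule finite_subset) simp
  moreover have "c * kQ_one p \<noteq> 0 \<Longrightarrow> valid_path src tgt p" for p :: "('v,'e) qpath"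
    by (cases p) (auto simp: kQ_one_def split: if_splits)
  ultimately show ?thesis unfolding kQ_def by blast
qed




lemma geom_left: "(1 - (y::'a::ring_1)) * (\<Sum>i<n. y^i) = 1 - y^n"
proof (induction n)
  case 0 thus ?case by simp
next
  case (Suc n)
  have "(1 - y) * (\<Sum>i<Suc n. y^i) = (1 - y) * (\<Sum>i<n. y^i) + (1 - y) * y^n" by (simp add: distrib_left)
  also have "\<dots> = 1 - y^n + (y^n - y * y^n)" using Suc by (simp add: algebra_simps)
  also have "\<dots> = 1 - y ^ Suc n" by simp
  finally show ?case .
qed

lemma geom_right: "(\<Sum>i<n. (y::'a::ring_1)^i) * (1 - y) = 1 - y^n"
proof (induction n)
  case 0 thus ?case by simp
next
  case (Suc n)
  have "(\<Sum>i<Suc n. y^i) * (1 - y) = (\<Sum>i<n. y^i) * (1 - y) + y^n * (1 - y)" by (simp add: distrib_right)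
  also have "\<dots> = 1 - y^n + (y^n - y^n * y)" using Suc by (simp add: algebra_simps)
  also have "\<dots> = 1 - y ^ Suc n" by (simp add: power_commutes)
  finally show ?case .
qed

locale BQ =
  fixes src tgt :: "'e::finite \<Rightarrow> 'v::finite" and \<pi> :: "(('v,'e) qpath \<Rightarrow> 'k::field) \<Rightarrow> 'a::ring_1"
  assumes bq: "bound_quiver_alg src tgt \<pi>"
begin

abbreviation "KQ \<equiv> (kQ src tgt :: (('v,'e) qpath \<Rightarrow> 'k) set)"
abbreviation "RR n \<equiv> (arrow_ideal_pow src tgt n :: (('v,'e) qpath \<Rightarrow> 'k) set)"
definition "Rd n = \<pi> ` RR n"
abbreviation "E \<equiv> ev \<pi>"
abbreviation "P \<equiv> pth \<pi>"
abbreviation "cs \<equiv> csc \<pi>"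

lemma bqu: "(\<forall>x \<in> KQ. \<forall>y \<in> KQ. \<pi> (\<lambda>p. x p + y p) = \<pi> x + \<pi> y) \<and>
     (\<forall>x \<in> KQ. \<forall>y \<in> KQ. \<pi> (kQ_mult tgt x y) = \<pi> x * \<pi> y) \<and>
     \<pi> kQ_one = 1 \<and>
     \<pi> ` KQ = UNIV \<and>
     (\<exists>m \<ge> 2. RR m \<subseteq> {x \<in> KQ. \<pi> x = 0} \<and>
              {x \<in> KQ. \<pi> x = 0} \<subseteq> RR 2)"
  using bq unfolding bound_quiver_alg_def .

lemma pi_add: "x \<in> KQ \<Longrightarrow> y \<in> KQ \<Longrightarrow> \<pi> (\<lambda>p. x p + y p) = \<pi> x + \<pi> y"
  using conjunct1[OF bqu] by blast
lemma pi_mult: "x \<in> KQ \<Longrightarrow> y \<in> KQ \<Longrightarrow> \<pi> (kQ_mult tgt x y) = \<pi> x * \<pi> y"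
  using conjunct1[OF conjunct2[OF bqu]] by blast
lemma pi_one: "\<pi> kQ_one = 1"
  using conjunct1[OF conjunct2[OF conjunct2[OF bqu]]] .
lemma pi_image: "\<pi> ` KQ = UNIV"
  using conjunct1[OF conjunct2[OF conjunct2[OF conjunct2[OF bqu]]]] .
lemma pi_surj: "\<exists>x \<in> KQ. \<pi> x = u"
  using pi_image by (metis UNIV_I imageE)
lemma ker_prop: "\<exists>m\<ge>2. RR m \<subseteq> {x \<in> KQ. \<pi> x = 0} \<and> {x \<in> KQ. \<pi> x = 0} \<subseteq> RR 2"
  using conjunct2[OF conjunct2[OF conjunct2[OF conjunct2[OF bqu]]]] .

lemma zero_in: "(\<lambda>p. 0) \<in> KQ"
  using pow_zero_in[of src tgt 0] pow_0 by metis

lemma pi_zero: "\<pi> (\<lambda>p. 0) = 0"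
  using pi_add[OF zero_in zero_in] by simp

lemma neg_in: "x \<in> KQ \<Longrightarrow> (\<lambda>p. - x p) \<in> KQ"
  using pow_neg_in[of x src tgt 0] pow_0 by metis

lemma pi_neg: "x \<in> KQ \<Longrightarrow> \<pi> (\<lambda>p. - x p) = - \<pi> x"
  using pi_add[OF neg_in, of x x] pi_zero by (simp add: eq_neg_iff_add_eq_0)

lemma diff_in: "x \<in> KQ \<Longrightarrow> y \<in> KQ \<Longrightarrow> (\<lambda>p. x p - y p) \<in> KQ"
  using kQ_add_in[OF _ neg_in, of x y] by simp

lemma pi_diff: "x \<in> KQ \<Longrightarrow> y \<in> KQ \<Longrightarrow> \<pi> (\<lambda>p. x p - y p) = \<pi> x - \<pi> y"
  using pi_add[OF _ neg_in, of x y] pi_neg[of y] by simp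

lemma coeff_eq:
  assumes "x \<in> KQ" "y \<in> KQ" "\<pi> x = \<pi> y" "plen p \<le> 1"
  shows "x p = y p"
proof -
  have "(\<lambda>p. x p - y p) \<in> {x \<in> KQ. \<pi> x = 0}" using assms pi_diff diff_in by simp
  hence "(\<lambda>p. x p - y p) \<in> RR 2" using ker_prop by blast
  hence "x p - y p = 0" using assms(4) unfolding arrow_ideal_pow_def by fastforce
  thus ?thesis by simp
qed

lemma Rd_0: "Rd 0 = UNIV"
  unfolding Rd_def pow_0 using pi_image .

lemma Rd_mult: "u \<in> Rd a \<Longrightarrow> v \<in> Rd b \<Longrightarrow> u * v \<in> Rd (a + b)"
proof -
  assume "u \<in> Rd a" "v \<in> Rd b"
  then obtain x y where x: "x \<in> RR a" "u = \<pi> x" and y: "y \<in> RR b" "v = \<pi> y" unfolding Rd_def by blast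
  have "x \<in> KQ" "y \<in> KQ" using x y unfolding arrow_ideal_pow_def by blast+
  hence "u * v = \<pi> (kQ_mult tgt x y)" using x y pi_mult by simp
  thus ?thesis unfolding Rd_def using kQ_mult_pow[OF x(1) y(1)] by blast
qed

lemma Rd_add: "u \<in> Rd a \<Longrightarrow> v \<in> Rd a \<Longrightarrow> u + v \<in> Rd a"
proof -
  assume "u \<in> Rd a" "v \<in> Rd a"
  then obtain x y where x: "x \<in> RR a" "u = \<pi> x" and y: "y \<in> RR a" "v = \<pi> y" unfolding Rd_def by blast
  have "x \<in> KQ" "y \<in> KQ" using x y unfolding arrow_ideal_pow_def by blast+
  hence "u + v = \<pi> (\<lambda>p. x p + y p)" using x y pi_add by simp
  thus ?thesis unfolding Rd_def using pow_add_in[OF x(1) y(1)] by blast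
qed

lemma Rd_neg: "u \<in> Rd a \<Longrightarrow> - u \<in> Rd a"
proof -
  assume "u \<in> Rd a"
  then obtain x where x: "x \<in> RR a" "u = \<pi> x" unfolding Rd_def by blast
  have "x \<in> KQ" using x unfolding arrow_ideal_pow_def by blast
  hence "- u = \<pi> (\<lambda>p. - x p)" using x pi_neg by simp
  thus ?thesis unfolding Rd_def using pow_neg_in[OF x(1)] by blast
qed

lemma Rd_diff: "u \<in> Rd a \<Longrightarrow> v \<in> Rd a \<Longrightarrow> u - v \<in> Rd a"
  using Rd_add[OF _ Rd_neg, of u a v] by simp

lemma Rd_zero: "0 \<in> Rd a"
  unfolding Rd_def using pow_zero_in pi_zero by (metis image_eqI)

lemma Rd_mono: "a \<le> b \<Longrightarrow> Rd b \<subseteq> Rd a"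
  unfolding Rd_def using pow_mono by (metis image_mono)

lemma Rd_lmult: "u \<in> Rd a \<Longrightarrow> x * u \<in> Rd a"
  using Rd_mult[of x 0 u a] Rd_0 by simp

lemma Rd_rmult: "u \<in> Rd a \<Longrightarrow> u * x \<in> Rd a"
  using Rd_mult[of u a x 0] Rd_0 by simp

lemma Rd_large: "\<exists>m. \<forall>k\<ge>m. Rd k = {0}"
proof -
  obtain m where m: "RR m \<subseteq> {x \<in> KQ. \<pi> x = 0}" using ker_prop by blast
  have "\<forall>k\<ge>m. Rd k = {0}"
  proof (intro allI impI)
    fix k assume "m \<le> k"
    hence "Rd k \<subseteq> Rd m" by (rule Rd_mono)
    moreover have "Rd m \<subseteq> {0}" using m unfolding Rd_def by blast
    ultimately show "Rd k = {0}" using Rd_zero by blast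
  qed
  thus ?thesis by blast
qed

lemma nil_left: assumes "r \<in> Rd 1" "u = r * u" shows "u = 0"
proof -
  have "u \<in> Rd k" for k
  proof (induction k)
    case 0 thus ?case using Rd_0 by simp
  next
    case (Suc k) thus ?case using Rd_mult[OF assms(1) Suc] assms(2) by simp
  qed
  thus ?thesis using Rd_large by blast
qed

lemma nil_right: assumes "r \<in> Rd 1" "u = u * r" shows "u = 0"
proof -
  have "u \<in> Rd k" for k
  proof (induction k)
    case 0 thus ?case using Rd_0 by simp
  next
    case (Suc k) thus ?case using Rd_mult[OF Suc assms(1)] assms(2) by simp
  qed
  thus ?thesis using Rd_large by blast
qed

lemma Rd_pow: "y \<in> Rd 1 \<Longrightarrow> y ^ k \<in> Rd k"
proof (induction k)
  case 0 thus ?case using Rd_0 by simp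
next
  case (Suc k) thus ?case using Rd_mult[OF Suc(2) Suc(1)[OF Suc(2)]] by simp
qed

lemma Rd_jac: "Rd 1 \<subseteq> jac_rad"
proof
  fix r assume r: "r \<in> Rd 1"
  show "r \<in> jac_rad" unfolding jac_rad_def
  proof (intro CollectI allI)
    fix x
    have y: "x * r \<in> Rd 1" using r Rd_lmult by blast
    obtain m where "\<forall>k\<ge>m. Rd k = {0}" using Rd_large by blast
    hence "(x * r) ^ m = 0" using Rd_pow[OF y, of m] by blast
    thus "\<exists>u. (1 - x * r) * u = 1 \<and> u * (1 - x * r) = 1"
      using geom_left[of "x*r" m] geom_right[of "x*r" m] by auto
  qed
qed

lemma pb_in: "valid_path src tgt p \<Longrightarrow> pbasis p \<in> KQ"
  by (rule pbasis_in)

lemma triv_valid: "valid_path src tgt (v, [])" by simp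

lemma P_cat: assumes "valid_path src tgt p" "valid_path src tgt q" "pend tgt p = fst q"
  shows "P (fst p, snd p @ snd q) = P p * P q"
proof -
  have "P p * P q = \<pi> (kQ_mult tgt (pbasis p) (pbasis q))"
    unfolding pth_def using pi_mult pb_in assms by simp
  thus ?thesis unfolding pth_def kQ_mult_pbasis using assms(3) by simp
qed

lemma E_eq: "E v = P (v, [])" unfolding ev_def pth_def ..

lemma E_E: "E u * E v = (if u = v then E u else 0)"
proof -
  have "E u * E v = \<pi> (kQ_mult tgt (pbasis (u,[])) (pbasis (v,[])))"
    unfolding ev_def using pi_mult pb_in triv_valid by metis
  thus ?thesis unfolding kQ_mult_pbasis ev_def using pi_zero by simp
qed

lemma E_idem[simp]: "E v * E v = E v" using E_E by simp

lemma E_P: assumes "valid_path src tgt p" shows "E (fst p) * P p = P p"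
  using P_cat[of "(fst p, [])" p] assms E_eq by simp

lemma P_E: assumes "valid_path src tgt p" shows "P p * E (pend tgt p) = P p"
  using P_cat[of p "(pend tgt p, [])"] assms E_eq by simp

lemma P_Rd: "valid_path src tgt p \<Longrightarrow> n \<le> plen p \<Longrightarrow> P p \<in> Rd n"
  unfolding pth_def Rd_def using pbasis_pow by blast

lemma sc_in: "(\<lambda>p. c * kQ_one p) \<in> KQ" by (rule scal_in)

lemma cs_lmult: "x \<in> KQ \<Longrightarrow> cs c * \<pi> x = \<pi> (\<lambda>r. c * x r)"
proof -
  assume x: "x \<in> KQ"
  have "cs c * \<pi> x = \<pi> (kQ_mult tgt (\<lambda>p. c * kQ_one p) x)"
    unfolding csc_def by (rule pi_mult[OF sc_in x, symmetric])
  also have "\<dots> = \<pi> (\<lambda>r. c * x r)" by (simp only: kQ_mult_scal_left)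
  finally show ?thesis .
qed

lemma cs_rmult: "x \<in> KQ \<Longrightarrow> \<pi> x * cs c = \<pi> (\<lambda>r. x r * c)"
proof -
  assume x: "x \<in> KQ"
  have "\<pi> x * cs c = \<pi> (kQ_mult tgt x (\<lambda>p. c * kQ_one p))"
    unfolding csc_def by (rule pi_mult[OF x sc_in, symmetric])
  also have "\<dots> = \<pi> (\<lambda>r. x r * c)" by (simp only: kQ_mult_scal_right)
  finally show ?thesis .
qed

lemma cs_comm: "cs c * u = u * cs c"
proof -
  obtain x where x: "x \<in> KQ" "u = \<pi> x" using pi_surj by metis
  have e: "(\<lambda>r. c * x r) = (\<lambda>r. x r * c)" by (rule ext) (rule mult.commute)
  show ?thesis unfolding x(2) cs_lmult[OF x(1)] cs_rmult[OF x(1)] e ..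
qed

lemma cs_add: "cs (a + b) = cs a + cs b"
  unfolding csc_def using pi_add[OF sc_in sc_in] by (simp add: distrib_right)

lemma cs_mult: "cs a * cs b = cs (a * b)"
  using cs_lmult[OF sc_in, of a b] unfolding csc_def by (simp add: mult.assoc)

lemma cs_one: "cs 1 = 1" unfolding csc_def using pi_one by simp

lemma cs_zero: "cs 0 = 0" unfolding csc_def using pi_zero by simp

lemma cs_diff: "cs (a - b) = cs a - cs b"
  using cs_add[of "a - b" b] by (simp add: algebra_simps)

lemma cs_P: "valid_path src tgt p \<Longrightarrow> \<pi> (\<lambda>r. c * pbasis p r) = cs c * P p"
  unfolding pth_def using cs_lmult pb_in by metis

lemma scb_in: "valid_path src tgt p \<Longrightarrow> (\<lambda>r. c * pbasis p r) \<in> KQ"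
  using cs_lmult pb_in unfolding kQ_def by (auto simp: pbasis_def)

lemma sep: assumes "valid_path src tgt p" "plen p \<le> 1" "cs c * P p \<in> Rd (Suc (plen p))"
  shows "c = 0"
proof -
  obtain z where z: "z \<in> RR (Suc (plen p))" "cs c * P p = \<pi> z" using assms(3) unfolding Rd_def by blast
  have "z \<in> KQ" using z unfolding arrow_ideal_pow_def by blast
  have "(\<lambda>r. c * pbasis p r) p = z p"
    by (rule coeff_eq[OF scb_in[OF assms(1)] \<open>z \<in> KQ\<close>]) (use z assms cs_P in auto)
  moreover have "z p = 0" using z unfolding arrow_ideal_pow_def by fastforce
  ultimately show ?thesis by simp
qed

lemma E_notin: "cs c * E v \<in> Rd 1 \<Longrightarrow> c = 0"
  using sep[of "(v,[])" c] E_eq by simp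

lemma corner:
  assumes x: "x \<in> KQ"
  shows "\<exists>r. r \<in> Rd 1 \<and> E v * r * E v = r \<and> E v * \<pi> x * E v = cs (x (v,[])) * E v + r"
proof -
  define e :: "('v,'e) qpath \<Rightarrow> 'k" where "e = pbasis (v,[])"
  have e_in: "e \<in> KQ" unfolding e_def by (rule pb_in) simp
  define z where "z = kQ_mult tgt e (kQ_mult tgt x e)"
  have xe_in: "kQ_mult tgt x e \<in> KQ" using kQ_mult_in[OF x e_in] .
  have piz: "\<pi> z = E v * (\<pi> x * E v)"
    unfolding z_def using pi_mult[OF e_in xe_in] pi_mult[OF x e_in] unfolding ev_def e_def by simp
  have z_eq: "z = (\<lambda>r. if fst r = v then (if pend tgt r = v then x r else 0) else 0)"
    unfolding z_def e_def kQ_mult_triv_left kQ_mult_triv_right ..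
  define c where "c = x (v,[])"
  define z1 where "z1 = (\<lambda>r. if snd r = [] then 0 else z r)"
  have z1x: "z1 r \<noteq> 0 \<Longrightarrow> x r \<noteq> 0 \<and> snd r \<noteq> []" for r
    unfolding z1_def z_eq by (auto split: if_splits)
  have z1_in: "z1 \<in> RR 1"
  proof -
    have "{r. z1 r \<noteq> 0} \<subseteq> {r. x r \<noteq> 0}" using z1x by blast
    moreover have "finite {r. x r \<noteq> 0}" using x unfolding kQ_def by blast
    ultimately have "finite {r. z1 r \<noteq> 0}" by (rule finite_subset)
    moreover have "\<forall>r. z1 r \<noteq> 0 \<longrightarrow> valid_path src tgt r" using z1x x unfolding kQ_def by blast
    moreover have "\<forall>r. z1 r \<noteq> 0 \<longrightarrow> 1 \<le> plen r" using z1x unfolding plen_def by (simp add: Suc_leI)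
    ultimately show ?thesis unfolding kQ_def arrow_ideal_pow_def by blast
  qed
  have z1_kQ: "z1 \<in> KQ" using z1_in unfolding arrow_ideal_pow_def by blast
  have z_split: "z = (\<lambda>r. z1 r + c * pbasis (v,[]) r)"
  proof (rule ext)
    fix r :: "('v,'e) qpath"
    obtain a b where r: "r = (a, b)" by (cases r)
    show "z r = z1 r + c * pbasis (v,[]) r"
      unfolding r z1_def z_eq c_def by (cases b) (auto simp: pbasis_def)
  qed
  have piz2: "\<pi> z = \<pi> z1 + cs c * E v"
    unfolding z_split using pi_add[OF z1_kQ scb_in[of "(v,[])" c]] cs_P[of "(v,[])" c] E_eq by simp
  define r where "r = \<pi> z1"
  have r_in: "r \<in> Rd 1" unfolding r_def Rd_def using z1_in by blast
  have m: "E v * \<pi> x * E v = cs c * E v + r" using piz piz2 unfolding r_def by (simp add: mult.assoc add.commute)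
  have h1: "E v * (cs c * E v) * E v = cs c * E v"
  proof -
    have "E v * (cs c * E v) * E v = (E v * cs c) * (E v * E v)" by (simp only: mult.assoc)
    also have "\<dots> = (cs c * E v) * E v" by (simp only: cs_comm[of c "E v"] E_idem)
    also have "\<dots> = cs c * E v" by (simp only: mult.assoc E_idem)
    finally show ?thesis .
  qed
  have h2: "E v * (E v * \<pi> x * E v) * E v = E v * \<pi> x * E v"
  proof -
    have "E v * (E v * \<pi> x * E v) * E v = (E v * E v) * \<pi> x * (E v * E v)" by (simp only: mult.assoc)
    thus ?thesis by (simp only: E_idem)
  qed
  have r_eq: "r = E v * \<pi> x * E v - cs c * E v" using m by simp
  have "E v * r * E v = E v * (E v * \<pi> x * E v) * E v - E v * (cs c * E v) * E v"
    unfolding r_eq by (simp only: right_diff_distrib left_diff_distrib)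
  hence "E v * r * E v = r" unfolding h1 h2 r_eq .
  thus ?thesis using r_in m unfolding c_def by blast
qed

lemma corner': "\<exists>c r. r \<in> Rd 1 \<and> E v * r * E v = r \<and> E v * u * E v = cs c * E v + r"
  using pi_surj[of u] corner by metis

lemma jac_Rd: "(jac_rad :: 'a set) \<subseteq> Rd 1"
proof
  fix y :: 'a assume y: "y \<in> jac_rad"
  obtain x where x: "x \<in> KQ" "y = \<pi> x" using pi_surj by metis
  show "y \<in> Rd 1"
  proof (cases "\<forall>v. x (v, []) = 0")
    case True
    have "\<forall>p. x p \<noteq> 0 \<longrightarrow> 1 \<le> plen p"
    proof (intro allI impI)
      fix p :: "('v,'e) qpath" assume "x p \<noteq> 0"
      obtain a b where p: "p = (a,b)" by (cases p)
      show "1 \<le> plen p" using True \<open>x p \<noteq> 0\<close> unfolding p by (cases b) auto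
    qed
    hence "x \<in> RR 1" using x unfolding arrow_ideal_pow_def by blast
    thus ?thesis unfolding Rd_def x(2) by blast
  next
    case False
    then obtain v where c: "x (v,[]) \<noteq> 0" by blast
    define c where "c = x (v,[])"
    obtain r where r: "r \<in> Rd 1" "E v * y * E v = cs c * E v + r" using corner[OF x(1), of v] x(2) c_def by blast
    define t where "t = cs (inverse c) * E v"
    obtain u where u: "u * (1 - t * y) = 1" using y unfolding jac_rad_def by blast
    have "t * y * E v = cs (inverse c) * (E v * y * E v)"
      unfolding t_def by (simp add: mult.assoc)
    also have "\<dots> = cs (inverse c) * cs c * E v + cs (inverse c) * r" using r(2) by (simp add: distrib_left mult.assoc)
    also have "\<dots> = E v + cs (inverse c) * r" using c unfolding c_def by (simp add: cs_mult cs_one)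
    finally have ty: "t * y * E v = E v + cs (inverse c) * r" .
    have "E v = u * (1 - t * y) * E v" using u by simp
    also have "\<dots> = u * (E v - t * y * E v)" by (simp add: mult.assoc right_diff_distrib left_diff_distrib)
    also have "\<dots> = - (u * cs (inverse c) * r)" unfolding ty by (simp add: mult.assoc)
    finally have "E v \<in> Rd 1" using Rd_neg Rd_lmult[OF r(1)] by metis
    hence "cs 1 * E v \<in> Rd 1" by (simp add: cs_one)
    hence "(1::'k) = 0" by (rule E_notin)
    thus ?thesis by simp
  qed
qed

lemma jac_eq: "(jac_rad :: 'a set) = Rd 1" using jac_Rd Rd_jac by blast

end



locale LQ =
  fixes src tgt :: "'e::finite \<Rightarrow> 'v::finite" and \<phi> :: "'v \<Rightarrow> nat"
  assumes phi_bij: "bij_betw \<phi> UNIV {1..card (UNIV :: 'v set)}"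
    and arr_bij: "bij_betw (\<lambda>x. (\<phi> (src x), \<phi> (tgt x))) {x. src x \<noteq> tgt x}
          {(a, b). (1 \<le> a \<and> b = a + 1 \<and> b \<le> card (UNIV :: 'v set)) \<or> (1 \<le> b \<and> a = b + 1 \<and> a \<le> card (UNIV :: 'v set))}"
begin

definition D :: "'v \<Rightarrow> 'v \<Rightarrow> nat" where "D i j = nat \<bar>int (\<phi> i) - int (\<phi> j)\<bar>"

definition minp :: "'v \<Rightarrow> 'v \<Rightarrow> ('v,'e) qpath \<Rightarrow> bool" where
  "minp i j p \<longleftrightarrow> valid_path src tgt p \<and> fst p = i \<and> pend tgt p = j \<and> plen p = D i j"

lemma phi_inj: "\<phi> i = \<phi> j \<Longrightarrow> i = j"
  using phi_bij unfolding bij_betw_def inj_on_def by blast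

lemma phi_range: "1 \<le> \<phi> i \<and> \<phi> i \<le> card (UNIV :: 'v set)"
  using phi_bij unfolding bij_betw_def by auto

lemma phi_surj: "1 \<le> k \<Longrightarrow> k \<le> card (UNIV :: 'v set) \<Longrightarrow> \<exists>i. \<phi> i = k"
  using phi_bij unfolding bij_betw_def by (metis atLeastAtMost_iff imageE)

lemma D_zero: "D i j = 0 \<longleftrightarrow> i = j"
  unfolding D_def using phi_inj by fastforce

lemma step: "src x \<noteq> tgt x \<Longrightarrow> \<phi> (tgt x) = \<phi> (src x) + 1 \<or> \<phi> (src x) = \<phi> (tgt x) + 1"
  using arr_bij unfolding bij_betw_def by auto

lemma step_le: "D (src x) (tgt x) \<le> 1"
  using step[of x] unfolding D_def by (cases "src x = tgt x") auto

lemma arr_exists: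
  assumes "1 \<le> a" "b \<le> card (UNIV :: 'v set)" "b = a + 1 \<or> a = b + 1" "1 \<le> b" "a \<le> card (UNIV :: 'v set)"
  shows "\<exists>x. src x \<noteq> tgt x \<and> \<phi> (src x) = a \<and> \<phi> (tgt x) = b"
proof -
  have "(a, b) \<in> (\<lambda>x. (\<phi> (src x), \<phi> (tgt x))) ` {x. src x \<noteq> tgt x}"
    using arr_bij assms unfolding bij_betw_def by auto
  thus ?thesis by auto
qed

lemma arr_inj: "src x \<noteq> tgt x \<Longrightarrow> src y \<noteq> tgt y \<Longrightarrow> src x = src y \<Longrightarrow> tgt x = tgt y \<Longrightarrow> x = y"
  using arr_bij unfolding bij_betw_def inj_on_def by auto

lemma lower: "valid_path src tgt (i, as) \<Longrightarrow> D i (pend tgt (i, as)) \<le> length as"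
proof (induction as arbitrary: i)
  case Nil thus ?case by (simp add: D_def)
next
  case (Cons x as)
  hence s: "src x = i" and v: "valid_path src tgt (tgt x, as)" by (auto simp: valid_cons)
  have "D (tgt x) (pend tgt (tgt x, as)) \<le> length as" using Cons.IH v .
  moreover have "D i (tgt x) \<le> 1" using step_le[of x] s by simp
  ultimately show ?case unfolding D_def by simp
qed

lemma lower': "valid_path src tgt p \<Longrightarrow> D (fst p) (pend tgt p) \<le> plen p"
  using lower[of "fst p" "snd p"] by (simp add: plen_def)

lemma neighbor:
  assumes "i \<noteq> j"
  shows "\<exists>x. src x = i \<and> src x \<noteq> tgt x \<and> D (tgt x) j + 1 = D i j"
proof -
  have ne: "\<phi> i \<noteq> \<phi> j" using assms phi_inj by blast
  define k where "k = (if \<phi> i < \<phi> j then \<phi> i + 1 else \<phi> i - 1)"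
  have "1 \<le> k \<and> k \<le> card (UNIV :: 'v set)" using phi_range[of i] phi_range[of j] ne unfolding k_def by auto
  moreover have "k = \<phi> i + 1 \<or> \<phi> i = k + 1" using phi_range[of i] phi_range[of j] ne unfolding k_def by auto
  ultimately obtain x where x: "src x \<noteq> tgt x" "\<phi> (src x) = \<phi> i" "\<phi> (tgt x) = k"
    using arr_exists[of "\<phi> i" k] phi_range[of i] by blast
  have "src x = i" using x phi_inj by blast
  moreover have "D (tgt x) j + 1 = D i j" using x ne unfolding D_def k_def by auto
  ultimately show ?thesis using x by blast
qed

lemma minp_exists: "\<exists>p. minp i j p"
proof (induction "D i j" arbitrary: i)
  case 0
  hence "i = j" using D_zero by simp
  hence "minp i j (i, [])" unfolding minp_def by (simp add: D_def)
  thus ?case by blast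
next
  case (Suc n)
  hence "i \<noteq> j" using D_zero by force
  then obtain x where x: "src x = i" "src x \<noteq> tgt x" "D (tgt x) j + 1 = D i j" using neighbor by blast
  obtain p where p: "minp (tgt x) j p" using Suc x by force
  have "minp i j (i, x # snd p)"
    using p x unfolding minp_def by (cases p) (auto simp: valid_cons plen_def)
  thus ?case by blast
qed

lemma first_step:
  assumes "minp i j (i, x # as)"
  shows "src x = i \<and> src x \<noteq> tgt x \<and> minp (tgt x) j (tgt x, as) \<and> D (tgt x) j + 1 = D i j \<and>
         \<phi> (tgt x) = (if \<phi> i < \<phi> j then \<phi> i + 1 else \<phi> i - 1)"
proof -
  have s: "src x = i" and v: "valid_path src tgt (tgt x, as)" and e: "pend tgt (tgt x, as) = j"
    and l: "length as + 1 = D i j"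
    using assms unfolding minp_def by (auto simp: valid_cons)
  have lo: "D (tgt x) j \<le> length as" using lower[OF v] e by simp
  have st: "D i (tgt x) \<le> 1" using step_le[of x] s by simp
  have eq: "D (tgt x) j = length as" using lo st l unfolding D_def by auto
  have ne: "src x \<noteq> tgt x" using eq l s by auto
  have ph: "\<phi> (tgt x) = (if \<phi> i < \<phi> j then \<phi> i + 1 else \<phi> i - 1)"
    using step[OF ne] s eq l unfolding D_def by auto
  show ?thesis using s ne v e eq l ph unfolding minp_def by (simp add: plen_def)
qed

lemma minp_unique: "minp i j (i, as) \<Longrightarrow> minp i j (i, bs) \<Longrightarrow> as = bs"
proof (induction as arbitrary: i bs)
  case Nil
  hence "D i j = 0" unfolding minp_def by (simp add: D_def)
  thus ?case using Nil unfolding minp_def by (simp add: plen_def D_def)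
next
  case (Cons x as)
  have "D i j \<noteq> 0" using Cons.prems(1) unfolding minp_def by (simp add: plen_def)
  then obtain y bs' where bs: "bs = y # bs'" using Cons.prems(2) unfolding minp_def
    by (cases bs) (auto simp: plen_def)
  note fx = first_step[OF Cons.prems(1)] and fy = first_step[OF Cons.prems(2)[unfolded bs]]
  have "tgt x = tgt y" using fx fy phi_inj by metis
  hence "x = y" using fx fy arr_inj by metis
  moreover have "as = bs'" using Cons.IH fx fy \<open>x = y\<close> by blast
  ultimately show ?case using bs by simp
qed

lemma minp_unique': "minp i j p \<Longrightarrow> minp i j q \<Longrightarrow> p = q"
  using minp_unique[of i j "snd p" "snd q"] unfolding minp_def by (metis prod.collapse)

lemma shortest_minp: "minp i j (shortest_path src tgt i j)"
proof -
  obtain p where p: "minp i j p" using minp_exists by blast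
  have pr: "\<And>q. valid_path src tgt q \<and> fst q = i \<and> pend tgt q = j \<and>
     (\<forall>q'. valid_path src tgt q' \<and> fst q' = i \<and> pend tgt q' = j \<longrightarrow> plen q \<le> plen q') \<longleftrightarrow> minp i j q"
  proof
    fix q assume q: "valid_path src tgt q \<and> fst q = i \<and> pend tgt q = j \<and>
     (\<forall>q'. valid_path src tgt q' \<and> fst q' = i \<and> pend tgt q' = j \<longrightarrow> plen q \<le> plen q')"
    hence "plen q \<le> plen p" using p unfolding minp_def by blast
    moreover have "D i j \<le> plen q" using lower'[of q] q by simp
    ultimately show "minp i j q" using q p unfolding minp_def by simp
  next
    fix q assume q: "minp i j q"
    thus "valid_path src tgt q \<and> fst q = i \<and> pend tgt q = j \<and>
     (\<forall>q'. valid_path src tgt q' \<and> fst q' = i \<and> pend tgt q' = j \<longrightarrow> plen q \<le> plen q')"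
      using lower' unfolding minp_def by fastforce
  qed
  have "shortest_path src tgt i j = p"
    unfolding shortest_path_def pr using p minp_unique' by blast
  thus ?thesis using p by simp
qed

lemma minp_cat:
  assumes "minp i t p" "minp t j q" "D i t + D t j = D i j"
  shows "minp i j (i, snd p @ snd q)"
proof -
  have "valid_path src tgt (fst p, snd p)" "valid_path src tgt (pend tgt (fst p, snd p), snd q)"
    using assms unfolding minp_def by auto
  hence "valid_path src tgt (fst p, snd p @ snd q)" by (rule valid_app)
  moreover have "pend tgt (i, snd p @ snd q) = j" using assms unfolding minp_def
    by (metis pend_app prod.collapse)
  ultimately show ?thesis using assms unfolding minp_def by (auto simp: plen_def)
qed

lemma minp_pverts: "minp i j (i, as) \<Longrightarrow> pverts tgt (i, as) = {t. min (\<phi> i) (\<phi> j) \<le> \<phi> t \<and> \<phi> t \<le> max (\<phi> i) (\<phi> j)}"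
proof (induction as arbitrary: i)
  case Nil
  hence "i = j" unfolding minp_def by simp
  thus ?case using phi_inj by auto
next
  case (Cons x as)
  note f = first_step[OF Cons.prems]
  have ih: "pverts tgt (tgt x, as) = {t. min (\<phi> (tgt x)) (\<phi> j) \<le> \<phi> t \<and> \<phi> t \<le> max (\<phi> (tgt x)) (\<phi> j)}"
    using Cons.IH f by blast
  have "D i j \<noteq> 0" using f by simp
  hence ne: "i \<noteq> j" using D_zero by simp
  hence ne': "\<phi> i \<noteq> \<phi> j" using phi_inj by blast
  show ?case
  proof (rule set_eqI)
    fix t
    show "t \<in> pverts tgt (i, x # as) \<longleftrightarrow> t \<in> {t. min (\<phi> i) (\<phi> j) \<le> \<phi> t \<and> \<phi> t \<le> max (\<phi> i) (\<phi> j)}"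
    proof (cases "t = i")
      case True thus ?thesis by simp
    next
      case False
      hence "\<phi> t \<noteq> \<phi> i" using phi_inj by blast
      thus ?thesis using ih f ne' False by auto
    qed
  qed
qed

end



locale QC = BQ src tgt \<pi> + LQ src tgt \<phi>
  for src tgt :: "'e::finite \<Rightarrow> 'v::finite" and \<pi> :: "(('v,'e) qpath \<Rightarrow> 'k::field) \<Rightarrow> 'a::ring_1"
    and \<phi> :: "'v \<Rightarrow> nat" +
  assumes condb1: "src x \<noteq> tgt x \<Longrightarrow> {arr src \<pi> x * l * ev \<pi> (tgt x) | l. True} = {ev \<pi> (src x) * l * ev \<pi> (tgt x) | l. True}"
    and condb2: "src x \<noteq> tgt x \<Longrightarrow> {ev \<pi> (src x) * l * ev \<pi> (tgt x) | l. True} = {ev \<pi> (src x) * l * arr src \<pi> x | l. True}"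
    and condc: "wpath src tgt \<pi> i j \<noteq> 0"
begin

abbreviation "W \<equiv> wpath src tgt \<pi>"
abbreviation "A \<equiv> arr src \<pi>"
abbreviation "SP \<equiv> shortest_path src tgt"

lemma Rd11: "u \<in> Rd 1 \<Longrightarrow> v \<in> Rd 1 \<Longrightarrow> u * v \<in> Rd 2"
  using Rd_mult[of u 1 v 1] by (simp add: numeral_2_eq_2)

lemma nat_abs_aux: "(b::nat) = a + 1 \<or> a = b + 1 \<Longrightarrow> nat \<bar>int b - int c\<bar> < nat \<bar>int a - int c\<bar> \<Longrightarrow>
  nat \<bar>int b - int c\<bar> + nat \<bar>int a - int b\<bar> = nat \<bar>int a - int c\<bar>"
  by (auto split: abs_split)

lemma D_step_between: "src x \<noteq> tgt x \<Longrightarrow> D (tgt x) j < D (src x) j \<Longrightarrow> D (tgt x) j + D (src x) (tgt x) = D (src x) j"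
  unfolding D_def using step[of x] nat_abs_aux by blast

lemma sp_props: "valid_path src tgt (SP i j) \<and> fst (SP i j) = i \<and> pend tgt (SP i j) = j \<and> plen (SP i j) = D i j"
  using shortest_minp[of i j] unfolding minp_def by blast

lemma W_def': "W i j = P (SP i j)" unfolding wpath_def ..

lemma E_W: "E i * W i j = W i j"
  using E_P[of "SP i j"] sp_props[of i j] W_def' by simp

lemma W_E: "W i j * E j = W i j"
  using P_E[of "SP i j"] sp_props[of i j] W_def' by simp

lemma SP_ii: "SP i i = (i, [])"
proof -
  have "minp i i (i, [])" unfolding minp_def by (simp add: D_def)
  thus ?thesis using minp_unique' shortest_minp by blast
qed

lemma W_ii: "W i i = E i" unfolding W_def' SP_ii E_eq ..

lemma W_Rd: "i \<noteq> j \<Longrightarrow> W i j \<in> Rd 1"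
  using P_Rd[of "SP i j" 1] sp_props[of i j] D_zero[of i j] W_def' by simp

lemma A_valid: "valid_path src tgt (src x, [x])" by (simp add: valid_cons)

lemma E_A: "E (src x) * A x = A x"
  unfolding arr_def using E_P[OF A_valid] by simp

lemma A_E: "A x * E (tgt x) = A x"
  unfolding arr_def using P_E[OF A_valid] by simp

lemma A_E': "A x * (E (tgt x) * z) = A x * z"
  using A_E[of x] by (metis mult.assoc)

lemma E_A': "E (src x) * (A x * z) = A x * z"
  using E_A[of x] by (metis mult.assoc)

lemma E_W': "E i * (W i j * z) = W i j * z"
  using E_W[of i j] by (metis mult.assoc)

lemma W_E': "W i j * (E j * z) = W i j * z"
  using W_E[of i j] by (metis mult.assoc)

lemma E_idem': "E i * (E i * z) = E i * z"
  using E_idem[of i] by (metis mult.assoc)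

lemma A_Rd: "A x \<in> Rd 1"
  unfolding arr_def by (rule P_Rd[OF A_valid]) simp

lemma W_split: assumes "D i t + D t j = D i j" shows "W i j = W i t * W t j"
proof -
  have m: "minp i j (i, snd (SP i t) @ snd (SP t j))"
    using minp_cat[OF shortest_minp shortest_minp assms] .
  hence "SP i j = (i, snd (SP i t) @ snd (SP t j))" using minp_unique' shortest_minp by blast
  thus ?thesis unfolding W_def' using P_cat[of "SP i t" "SP t j"] sp_props[of i t] sp_props[of t j] by simp
qed

lemma W_first:
  assumes "i \<noteq> j"
  shows "\<exists>x. src x = i \<and> src x \<noteq> tgt x \<and> D (tgt x) j < D i j \<and> W i j = A x * W (tgt x) j"
proof -
  obtain as where sp: "SP i j = (i, as)" using sp_props[of i j] by (metis prod.collapse)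
  have "D i j \<noteq> 0" using assms D_zero by simp
  hence "as \<noteq> []" using sp_props[of i j] sp by (auto simp: plen_def)
  then obtain x rest where as: "as = x # rest" by (cases as) auto
  have m: "minp i j (i, x # rest)" using shortest_minp[of i j] sp as by simp
  note f = first_step[OF m]
  have "SP (tgt x) j = (tgt x, rest)" using f minp_unique' shortest_minp by blast
  moreover have "P (i, x # rest) = P (src x, [x]) * P (tgt x, rest)"
  proof -
    have "valid_path src tgt (src x, [x])" by (rule A_valid)
    moreover have "valid_path src tgt (tgt x, rest)" using f unfolding minp_def by simp
    ultimately show ?thesis using P_cat[of "(src x, [x])" "(tgt x, rest)"] f by simp
  qed
  ultimately have "W i j = A x * W (tgt x) j" unfolding W_def' arr_def sp as by simp
  thus ?thesis using f by auto
qed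

lemma part1a:
  assumes ne: "src x \<noteq> tgt x" and r: "r \<in> Rd 1"
  shows "\<exists>r' \<in> Rd 1. E (src x) * r * A x = A x * r' * E (tgt x)"
proof -
  let ?i = "src x" and ?j = "tgt x"
  have "E ?i * (r * A x) * E ?j \<in> {E ?i * l * E ?j | l. True}" by blast
  then obtain l where l: "E ?i * (r * A x) * E ?j = A x * l * E ?j" using condb1[OF ne] by blast
  obtain c r2 where c: "r2 \<in> Rd 1" "E ?j * r2 * E ?j = r2" "E ?j * l * E ?j = cs c * E ?j + r2"
    using corner' by blast
  have lhs: "E ?i * (r * A x) * E ?j = E ?i * r * A x"
    using A_E[of x] by (simp add: mult.assoc)
  have "A x * l * E ?j = A x * (E ?j * l * E ?j)" using A_E[of x] by (metis mult.assoc)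
  also have "\<dots> = A x * (cs c * E ?j) + A x * r2" using c(3) by (simp add: distrib_left)
  also have "A x * (cs c * E ?j) = cs c * A x" using A_E[of x] cs_comm by (metis mult.assoc)
  finally have eq: "E ?i * r * A x = cs c * A x + A x * r2" using l lhs by simp
  have "cs c * A x = E ?i * r * A x - A x * r2" using eq by simp
  moreover have "E ?i * r * A x \<in> Rd 2" using Rd_mult[OF Rd_lmult[OF r, of "E ?i"] A_Rd[of x]] by (simp add: numeral_2_eq_2)
  moreover have "A x * r2 \<in> Rd 2" using Rd11[OF A_Rd c(1)] .
  ultimately have "cs c * A x \<in> Rd 2" using Rd_diff by simp
  hence "c = 0" using sep[OF A_valid[of x], of c] unfolding arr_def by (simp add: numeral_2_eq_2)
  hence "E ?i * r * A x = A x * r2" using eq cs_zero by simp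
  moreover have "r2 * E ?j = r2" using c(2) by (metis E_idem mult.assoc)
  ultimately show ?thesis using c(1) by (metis mult.assoc)
qed

lemma part1b:
  assumes ne: "src x \<noteq> tgt x" and r: "r \<in> Rd 1"
  shows "\<exists>r' \<in> Rd 1. A x * r * E (tgt x) = E (src x) * r' * A x"
proof -
  let ?i = "src x" and ?j = "tgt x"
  have "E ?i * (A x * r) * E ?j \<in> {E ?i * l * E ?j | l. True}" by blast
  then obtain l where l: "E ?i * (A x * r) * E ?j = E ?i * l * A x" using condb2[OF ne] by blast
  obtain c r2 where c: "r2 \<in> Rd 1" "E ?i * r2 * E ?i = r2" "E ?i * l * E ?i = cs c * E ?i + r2"
    using corner' by blast
  have lhs: "E ?i * (A x * r) * E ?j = A x * r * E ?j"
    using E_A[of x] by (metis mult.assoc)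
  have "E ?i * l * A x = (E ?i * l * E ?i) * A x" using E_A[of x] by (metis mult.assoc)
  also have "\<dots> = (cs c * E ?i) * A x + r2 * A x" using c(3) by (simp add: distrib_right)
  also have "(cs c * E ?i) * A x = cs c * A x" using E_A[of x] by (metis mult.assoc)
  finally have eq: "A x * r * E ?j = cs c * A x + r2 * A x" using l lhs by simp
  have "cs c * A x = A x * r * E ?j - r2 * A x" using eq by simp
  moreover have "A x * r * E ?j \<in> Rd 2" using Rd_rmult[OF Rd11[OF A_Rd r]] .
  moreover have "r2 * A x \<in> Rd 2" using Rd11[OF c(1) A_Rd] .
  ultimately have "cs c * A x \<in> Rd 2" using Rd_diff by simp
  hence "c = 0" using sep[OF A_valid[of x], of c] unfolding arr_def by (simp add: numeral_2_eq_2)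
  hence "A x * r * E ?j = r2 * A x" using eq cs_zero by simp
  moreover have "E ?i * r2 = r2" using c(2) by (metis E_idem mult.assoc)
  ultimately show ?thesis using c(1) by (metis mult.assoc)
qed

lemma F7a: "r \<in> Rd 1 \<Longrightarrow> \<exists>r' \<in> Rd 1. E i * r * W i j = W i j * r'"
proof (induction "D i j" arbitrary: i r rule: less_induct)
  case less
  show ?case
  proof (cases "i = j")
    case True
    have "E i * r * W i j = W i j * (r * E i)" unfolding True W_ii by (simp add: mult.assoc)
    thus ?thesis using Rd_rmult[OF less.prems] by blast
  next
    case False
    then obtain x where x: "src x = i" "src x \<noteq> tgt x" "D (tgt x) j < D i j" "W i j = A x * W (tgt x) j"
      using W_first by blast
    obtain r1 where r1: "r1 \<in> Rd 1" "E i * r * A x = A x * r1 * E (tgt x)" using part1a[OF x(2) less.prems] x(1) by blast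
    obtain r2 where r2: "r2 \<in> Rd 1" "E (tgt x) * r1 * W (tgt x) j = W (tgt x) j * r2"
      using less.hyps[OF x(3) r1(1)] by blast
    have "E i * r * W i j = (E i * r * A x) * W (tgt x) j" unfolding x(4) by (simp add: mult.assoc)
    also have "\<dots> = A x * (E (tgt x) * r1 * W (tgt x) j)" unfolding r1(2) by (simp add: mult.assoc A_E' E_W' E_W)
    also have "\<dots> = W i j * r2" unfolding r2(2) x(4) by (simp add: mult.assoc)
    finally show ?thesis using r2(1) by blast
  qed
qed

lemma F7b: "r \<in> Rd 1 \<Longrightarrow> \<exists>r' \<in> Rd 1. W i j * r * E j = E i * r' * W i j"
proof (induction "D i j" arbitrary: i r rule: less_induct)
  case less
  show ?case
  proof (cases "i = j")
    case True
    thus ?thesis unfolding True W_ii using less.prems by blast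
  next
    case False
    then obtain x where x: "src x = i" "src x \<noteq> tgt x" "D (tgt x) j < D i j" "W i j = A x * W (tgt x) j"
      using W_first by blast
    obtain r1 where r1: "r1 \<in> Rd 1" "W (tgt x) j * r * E j = E (tgt x) * r1 * W (tgt x) j"
      using less.hyps[OF x(3) less.prems] by blast
    obtain r2 where r2: "r2 \<in> Rd 1" "A x * r1 * E (tgt x) = E i * r2 * A x" using part1b[OF x(2) r1(1)] x(1) by blast
    have "W i j * r * E j = A x * (W (tgt x) j * r * E j)" unfolding x(4) by (simp add: mult.assoc)
    also have "\<dots> = (A x * r1 * E (tgt x)) * W (tgt x) j" unfolding r1(2) by (simp add: mult.assoc A_E' E_W' E_W)
    also have "\<dots> = E i * r2 * W i j" unfolding r2(2) x(4) by (simp add: mult.assoc)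
    finally show ?thesis using r2(1) by blast
  qed
qed

lemma valid_split: "valid_path src tgt (v, xs @ ys) \<Longrightarrow> valid_path src tgt (v, xs) \<and> valid_path src tgt (pend tgt (v, xs), ys)"
  by (induction xs arbitrary: v) (auto simp: valid_cons)

lemma pi_decomp:
  assumes x: "x \<in> KQ" and T0: "0 \<in> T" and Tadd: "\<And>a b. a \<in> T \<Longrightarrow> b \<in> T \<Longrightarrow> a + b \<in> T"
    and Tp: "\<And>p. x p \<noteq> 0 \<Longrightarrow> \<pi> (\<lambda>r. x p * pbasis p r) \<in> T"
  shows "\<pi> x \<in> T"
proof -
  have fin: "finite {p. x p \<noteq> 0}" using x unfolding kQ_def by blast
  have vp: "x p \<noteq> 0 \<Longrightarrow> valid_path src tgt p" for p using x unfolding kQ_def by blast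
  have main: "finite F \<Longrightarrow> F \<subseteq> {p. x p \<noteq> 0} \<Longrightarrow> (\<lambda>r. if r \<in> F then x r else 0) \<in> KQ \<and> \<pi> (\<lambda>r. if r \<in> F then x r else 0) \<in> T" for F
  proof (induction F rule: finite_induct)
    case empty
    have "(\<lambda>r. if r \<in> {} then x r else 0) = (\<lambda>r. 0)" by simp
    thus ?case using pi_zero zero_in T0 by simp
  next
    case (insert p F)
    have IH: "(\<lambda>r. if r \<in> F then x r else 0) \<in> KQ" "\<pi> (\<lambda>r. if r \<in> F then x r else 0) \<in> T"
      using insert.IH insert.prems by blast+
    have xp: "x p \<noteq> 0" using insert.prems by blast
    have e: "(\<lambda>r. if r \<in> insert p F then x r else 0) = (\<lambda>r. (if r \<in> F then x r else 0) + x p * pbasis p r)"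
    proof (rule ext)
      fix r show "(if r \<in> insert p F then x r else 0) = (if r \<in> F then x r else 0) + x p * pbasis p r"
        using insert.hyps(2) unfolding pbasis_def by (cases "r = p") simp_all
    qed
    have b: "(\<lambda>r. x p * pbasis p r) \<in> KQ" using scb_in[OF vp[OF xp]] .
    show ?case unfolding e using pi_add[OF IH(1) b] kQ_add_in[OF IH(1) b] Tadd[OF IH(2) Tp[OF xp]] by simp
  qed
  have "(\<lambda>r. if r \<in> {p. x p \<noteq> 0} then x r else 0) = x" by (rule ext) simp
  thus ?thesis using main[OF fin] by simp
qed

lemma ivt_path:
  assumes "valid_path src tgt (i, as)" "min (\<phi> i) (\<phi> (pend tgt (i, as))) \<le> \<phi> k" "\<phi> k \<le> max (\<phi> i) (\<phi> (pend tgt (i, as)))"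
  shows "\<exists>as1 as2. as = as1 @ as2 \<and> pend tgt (i, as1) = k"
  using assms
proof (induction as arbitrary: i)
  case (Nil i)
  hence "k = i" using phi_inj by force
  thus ?case by auto
next
  case (Cons x as i)
  show ?case
  proof (cases "k = i")
    case True
    have "x # as = [] @ (x # as) \<and> pend tgt (i, []) = k" using True by simp
    thus ?thesis by blast
  next
    case False
    hence nk: "\<phi> k \<noteq> \<phi> i" using phi_inj by blast
    have s: "src x = i" and v: "valid_path src tgt (tgt x, as)" using Cons.prems(1) by (auto simp: valid_cons)
    have d: "D (src x) (tgt x) \<le> 1" by (rule step_le)
    have "min (\<phi> (tgt x)) (\<phi> (pend tgt (tgt x, as))) \<le> \<phi> k \<and> \<phi> k \<le> max (\<phi> (tgt x)) (\<phi> (pend tgt (tgt x, as)))"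
      using Cons.prems(2,3) nk d s unfolding D_def by auto
    then obtain as1 as2 where "as = as1 @ as2" "pend tgt (tgt x, as1) = k" using Cons.IH v by blast
    thus ?thesis by (intro exI[of _ "x # as1"] exI[of _ as2]) simp
  qed
qed

lemma F5_step:
  assumes x: "src x = i" "src x \<noteq> tgt x" "min (\<phi> i) (\<phi> j) \<le> \<phi> (tgt x)" "\<phi> (tgt x) \<le> max (\<phi> i) (\<phi> j)"
  shows "\<exists>z. E i * y * E j = A x * z"
proof -
  let ?k = "tgt x"
  let ?T = "{A x * z | z. True}"
  obtain y' where y': "y' \<in> KQ" "\<pi> y' = y" using pi_surj by metis
  define e1 :: "('v,'e) qpath \<Rightarrow> 'k" where "e1 = pbasis (i,[])"
  define e2 :: "('v,'e) qpath \<Rightarrow> 'k" where "e2 = pbasis (j,[])"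
  have e1_in: "e1 \<in> KQ" and e2_in: "e2 \<in> KQ" unfolding e1_def e2_def by (rule pb_in, simp)+
  define zz where "zz = kQ_mult tgt e1 (kQ_mult tgt y' e2)"
  have ye_in: "kQ_mult tgt y' e2 \<in> KQ" using kQ_mult_in[OF y'(1) e2_in] .
  have zz_in: "zz \<in> KQ" unfolding zz_def using kQ_mult_in[OF e1_in ye_in] .
  have piz: "\<pi> zz = E i * y * E j"
    unfolding zz_def using pi_mult[OF e1_in ye_in] pi_mult[OF y'(1) e2_in] y'(2) unfolding ev_def e1_def e2_def by (simp add: mult.assoc)
  have zz_eq: "zz = (\<lambda>r. if fst r = i then (if pend tgt r = j then y' r else 0) else 0)"
    unfolding zz_def e1_def e2_def kQ_mult_triv_left kQ_mult_triv_right ..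
  have "\<pi> zz \<in> ?T"
  proof (rule pi_decomp[OF zz_in])
    show "0 \<in> ?T" by (metis (mono_tags, lifting) mem_Collect_eq mult_zero_right)
  next
    fix a b assume "a \<in> ?T" "b \<in> ?T"
    then obtain za zb where "a = A x * za" "b = A x * zb" by blast
    hence "a + b = A x * (za + zb)" by (simp add: distrib_left)
    thus "a + b \<in> ?T" by blast
  next
    fix p assume zp: "zz p \<noteq> 0"
    have vp: "valid_path src tgt p" using zz_in zp unfolding kQ_def by blast
    have fp: "fst p = i" and ep: "pend tgt p = j" using zp unfolding zz_eq by (auto split: if_splits)
    obtain as where p: "p = (i, as)" using fp by (metis prod.collapse)
    obtain as1 as2 where as: "as = as1 @ as2" "pend tgt (i, as1) = ?k"
      using ivt_path[of i as ?k] vp ep assms unfolding p by auto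
    have v1: "valid_path src tgt (i, as1)" and v2: "valid_path src tgt (?k, as2)"
      using valid_split[of i as1 as2] vp as unfolding p by auto
    have Pp: "P p = P (i, as1) * P (?k, as2)" using P_cat[OF v1 v2] as unfolding p by simp
    have "E i * (cs (zz p) * P (i, as1)) * E ?k \<in> {E (src x) * l * E ?k | l. True}" using x(1) by blast
    then obtain l where l: "E i * (cs (zz p) * P (i, as1)) * E ?k = A x * l * E ?k" using condb1[OF x(2)] by blast
    have c1: "E i * (cs (zz p) * P (i, as1)) = cs (zz p) * (E i * P (i, as1))"
      by (simp only: mult.assoc[symmetric] cs_comm[of "zz p" "E i"])
    have "E i * (cs (zz p) * P (i, as1)) * E ?k = cs (zz p) * (E i * P (i, as1) * E ?k)"
      unfolding c1 by (simp only: mult.assoc)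
    also have "E i * P (i, as1) * E ?k = P (i, as1)" using E_P[OF v1] P_E[OF v1] as(2) by simp
    finally have c2: "E i * (cs (zz p) * P (i, as1)) * E ?k = cs (zz p) * P (i, as1)" .
    have "cs (zz p) * P p = (cs (zz p) * P (i, as1)) * P (?k, as2)" using Pp by (simp add: mult.assoc)
    also have "\<dots> = (A x * l * E ?k) * P (?k, as2)" using l c2 by simp
    also have "\<dots> = A x * (l * E ?k * P (?k, as2))" by (simp add: mult.assoc)
    finally have "cs (zz p) * P p = A x * (l * E ?k * P (?k, as2))" .
    thus "\<pi> (\<lambda>r. zz p * pbasis p r) \<in> ?T" using cs_P[OF vp] by auto
  qed
  thus ?thesis using piz by auto
qed

lemma F5: "\<exists>z. E i * y * E j = W i j * z"
proof (induction "D i j" arbitrary: i y rule: less_induct)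
  case less
  show ?case
  proof (cases "i = j")
    case True
    have "E i * y * E j = W i j * (y * E j)" unfolding True W_ii by (simp add: mult.assoc)
    thus ?thesis by blast
  next
    case False
    then obtain x where x: "src x = i" "src x \<noteq> tgt x" "D (tgt x) j < D i j" "W i j = A x * W (tgt x) j"
      using W_first by blast
    have "D (tgt x) j + D i (tgt x) = D i j" using D_step_between[OF x(2)] x(1,3) by blast
    hence bt: "min (\<phi> i) (\<phi> j) \<le> \<phi> (tgt x) \<and> \<phi> (tgt x) \<le> max (\<phi> i) (\<phi> j)" unfolding D_def by auto
    obtain z where z: "E i * y * E j = A x * z" using F5_step[OF x(1,2)] bt by blast
    obtain z' where z': "E (tgt x) * z * E j = W (tgt x) j * z'" using less.hyps[OF x(3)] by blast
    have "E i * y * E j = E i * y * E j * E j" by (simp add: mult.assoc)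
    also have "\<dots> = A x * (E (tgt x) * z * E j)" unfolding z by (simp add: mult.assoc A_E')
    also have "\<dots> = W i j * z'" unfolding z' x(4) by (simp add: mult.assoc)
    finally show ?thesis by blast
  qed
qed

end



lemma between_abs: "min (a::nat) b \<le> c \<Longrightarrow> c \<le> max a b \<Longrightarrow> nat \<bar>int a - int c\<bar> + nat \<bar>int c - int b\<bar> = nat \<bar>int a - int b\<bar>"
  by (auto split: abs_split)
lemma outside_abs: "\<not> (min (a::nat) b \<le> c \<and> c \<le> max a b) \<Longrightarrow>
   (nat \<bar>int a - int b\<bar> + nat \<bar>int b - int c\<bar> = nat \<bar>int a - int c\<bar> \<and> c \<noteq> b) \<or>
   (nat \<bar>int c - int a\<bar> + nat \<bar>int a - int b\<bar> = nat \<bar>int c - int b\<bar> \<and> c \<noteq> a)"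
  by (auto split: abs_split)

context QC begin

lemma cs_W: "cs c * E i * W i j = W i j * cs c"
proof -
  have "cs c * E i * W i j = cs c * W i j" by (simp add: mult.assoc E_W)
  thus ?thesis using cs_comm[of c "W i j"] by simp
qed

lemma W_csE: "W i j * (cs a * E j) = W i j * cs a"
proof -
  have "W i j * (cs a * E j) = (W i j * cs a) * E j" by (simp add: mult.assoc)
  also have "\<dots> = (cs a * W i j) * E j" by (simp only: cs_comm[of a "W i j", symmetric])
  also have "\<dots> = cs a * W i j" by (simp only: mult.assoc W_E)
  also have "\<dots> = W i j * cs a" by (rule cs_comm)
  finally show ?thesis .
qed

lemma right_form: "\<exists>c r. r \<in> Rd 1 \<and> E j * r * E j = r \<and> E i * y * E j = W i j * (cs c * E j + r)"
proof -
  obtain z where z: "E i * y * E j = W i j * z" using F5 by blast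
  have "E i * y * E j = E i * y * E j * E j" by (simp add: mult.assoc)
  also have "\<dots> = W i j * (E j * z * E j)" unfolding z by (simp add: mult.assoc W_E')
  finally have e: "E i * y * E j = W i j * (E j * z * E j)" .
  obtain c r where "r \<in> Rd 1" "E j * r * E j = r" "E j * z * E j = cs c * E j + r" using corner' by blast
  thus ?thesis using e by metis
qed

lemma both_forms: "\<exists>c r r'. r \<in> Rd 1 \<and> E j * r * E j = r \<and> r' \<in> Rd 1 \<and> E i * r' * E i = r' \<and>
    E i * y * E j = W i j * (cs c * E j + r) \<and> E i * y * E j = (cs c * E i + r') * W i j"
proof -
  obtain c r where r: "r \<in> Rd 1" "E j * r * E j = r" "E i * y * E j = W i j * (cs c * E j + r)"
    using right_form by blast
  have rE: "r * E j = r" using r(2) by (metis E_idem mult.assoc)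
  obtain r1 where r1: "r1 \<in> Rd 1" "W i j * r * E j = E i * r1 * W i j" using F7b[OF r(1)] by blast
  define r' where "r' = E i * r1 * E i"
  have r'_in: "r' \<in> Rd 1" unfolding r'_def using Rd_lmult[OF Rd_rmult[OF r1(1)]] by (simp add: mult.assoc)
  have r'E: "E i * r' * E i = r'" unfolding r'_def by (simp add: mult.assoc E_idem')
  have "W i j * (cs c * E j + r) = W i j * cs c * E j + W i j * r" by (simp add: distrib_left mult.assoc)
  also have "W i j * cs c * E j = cs c * E i * W i j" using W_csE[of i j c] cs_W[of c i j] by (simp add: mult.assoc)
  also have "W i j * r = E i * r1 * W i j" using r1(2) rE by (simp add: mult.assoc)
  also have "E i * r1 * W i j = r' * W i j" unfolding r'_def by (simp add: mult.assoc E_W' E_W)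
  finally have "E i * y * E j = (cs c * E i + r') * W i j" using r(3) by (simp add: distrib_right)
  thus ?thesis using r r'_in r'E by blast
qed

lemma W_ne: "W i j \<noteq> 0" by (rule condc)

lemma uniq_left:
  assumes l1: "l1 \<in> Rd 1" and l2: "l2 \<in> Rd 1" and eq: "(cs a * E i + l1) * W i j = (cs b * E i + l2) * W i j"
  shows "a = b"
proof (rule ccontr)
  assume ne: "a \<noteq> b"
  have "cs a * W i j + l1 * W i j = cs b * W i j + l2 * W i j" using eq by (simp add: distrib_right mult.assoc E_W)
  hence "cs (a - b) * W i j = (l2 - l1) * W i j" by (simp add: cs_diff algebra_simps)
  hence "cs (inverse (a - b)) * (cs (a - b) * W i j) = cs (inverse (a - b)) * ((l2 - l1) * W i j)" by simp
  hence "W i j = (cs (inverse (a - b)) * (l2 - l1)) * W i j" using ne by (simp add: mult.assoc[symmetric] cs_mult cs_one)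
  moreover have "cs (inverse (a - b)) * (l2 - l1) \<in> Rd 1" using Rd_lmult[OF Rd_diff[OF l2 l1]] .
  ultimately have "W i j = 0" using nil_left by blast
  thus False using W_ne by blast
qed

lemma uniq_right:
  assumes l1: "l1 \<in> Rd 1" and l2: "l2 \<in> Rd 1" and eq: "W i j * (cs a * E j + l1) = W i j * (cs b * E j + l2)"
  shows "a = b"
proof (rule ccontr)
  assume ne: "a \<noteq> b"
  have "W i j * cs a + W i j * l1 = W i j * cs b + W i j * l2" using eq
    by (simp add: distrib_left W_csE)
  hence "W i j * cs (a - b) = W i j * (l2 - l1)" by (simp add: cs_diff algebra_simps)
  hence "(W i j * cs (a - b)) * cs (inverse (a - b)) = (W i j * (l2 - l1)) * cs (inverse (a - b))" by simp
  hence "W i j = W i j * ((l2 - l1) * cs (inverse (a - b)))" using ne by (simp add: mult.assoc cs_mult cs_one)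
  moreover have "(l2 - l1) * cs (inverse (a - b)) \<in> Rd 1" using Rd_rmult[OF Rd_diff[OF l2 l1]] .
  ultimately have "W i j = 0" using nil_right by blast
  thus False using W_ne by blast
qed

lemma pverts_SP: "pverts tgt (SP j i) = {t. min (\<phi> j) (\<phi> i) \<le> \<phi> t \<and> \<phi> t \<le> max (\<phi> j) (\<phi> i)}"
proof -
  have "SP j i = (j, snd (SP j i))" using sp_props[of j i] by (metis prod.collapse)
  moreover have "minp j i (j, snd (SP j i))" using shortest_minp[of j i] calculation by simp
  ultimately show ?thesis using minp_pverts by metis
qed

lemma part3_if:
  assumes tV: "t \<in> V" and bt: "min (\<phi> j) (\<phi> i) \<le> \<phi> t" "\<phi> t \<le> max (\<phi> j) (\<phi> i)"
    and l: "E i * l = l"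
  shows "factors_through \<pi> (\<lambda>x. (cs a * E i + l) * W i j * x) j i V"
proof -
  have "D i t + D t j = D i j" using between_abs[of "\<phi> i" "\<phi> j" "\<phi> t"] bt unfolding D_def by (simp add: min.commute max.commute)
  hence Wsplit: "W i j = W i t * W t j" by (rule W_split)
  define M where "M = cs a * E i + l"
  have EM: "E i * M = M" unfolding M_def using l by (simp add: distrib_left mult.assoc[symmetric] cs_comm[of a "E i"])
  define h :: "'a \<Rightarrow> 'v \<Rightarrow> 'a" where "h = (\<lambda>x s. if s = t then W t j * x else 0)"
  define g :: "('v \<Rightarrow> 'a) \<Rightarrow> 'a" where "g = (\<lambda>\<psi>. M * W i t * \<psi> t)"
  have 1: "\<forall>x \<in> Pmod \<pi> j. h x \<in> DSum \<pi> V"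
  proof
    fix x assume "x \<in> Pmod \<pi> j"
    have "h x s \<in> Pmod \<pi> s" for s
    proof (cases "s = t")
      case True
      have "h x s = E t * (W t j * x)" unfolding h_def True by (simp add: E_W')
      thus ?thesis unfolding Pmod_def True by blast
    next
      case False
      have "h x s = E s * 0" unfolding h_def using False by simp
      thus ?thesis unfolding Pmod_def by blast
    qed
    moreover have "s \<notin> V \<Longrightarrow> h x s = 0" for s unfolding h_def using tV by auto
    ultimately show "h x \<in> DSum \<pi> V" unfolding DSum_def by blast
  qed
  have 2: "\<forall>x \<in> Pmod \<pi> j. \<forall>y \<in> Pmod \<pi> j. h (x + y) = (\<lambda>s. h x s + h y s)"
    unfolding h_def by (auto simp: distrib_left)
  have 3: "\<forall>x \<in> Pmod \<pi> j. \<forall>c. h (x * c) = (\<lambda>s. h x s * c)"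
    unfolding h_def by (auto simp: mult.assoc)
  have 4: "\<forall>\<psi> \<in> DSum \<pi> V. g \<psi> \<in> Pmod \<pi> i"
    unfolding g_def Pmod_def using EM by (metis (mono_tags, lifting) mem_Collect_eq mult.assoc)
  have 5: "\<forall>\<psi> \<in> DSum \<pi> V. \<forall>\<psi>' \<in> DSum \<pi> V. g (\<lambda>s. \<psi> s + \<psi>' s) = g \<psi> + g \<psi>'"
    unfolding g_def by (simp add: distrib_left)
  have 6: "\<forall>\<psi> \<in> DSum \<pi> V. \<forall>c. g (\<lambda>s. \<psi> s * c) = g \<psi> * c"
    unfolding g_def by (simp add: mult.assoc)
  have 7: "\<forall>x \<in> Pmod \<pi> j. g (h x) = (cs a * E i + l) * W i j * x"
    unfolding g_def h_def M_def Wsplit by (simp add: mult.assoc)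
  show ?thesis unfolding factors_through_def using 1 2 3 4 5 6 7 by blast
qed

lemma zero_DSum: "(\<lambda>s. 0) \<in> DSum \<pi> V"
  unfolding DSum_def Pmod_def by (auto intro: exI[of _ 0])

lemma Pmod_zero: "0 \<in> Pmod \<pi> s"
proof -
  have "0 = E s * 0" by simp
  thus ?thesis unfolding Pmod_def by blast
qed

lemma Pmod_E: "E s \<in> Pmod \<pi> s"
proof -
  have "E s = E s * 1" by simp
  thus ?thesis unfolding Pmod_def by blast
qed

lemma DSum_single: "t \<in> V \<Longrightarrow> y \<in> Pmod \<pi> t \<Longrightarrow> (\<lambda>s. if s = t then y else 0) \<in> DSum \<pi> V"
  unfolding DSum_def using Pmod_zero by auto

lemma DSum_restr: "F \<subseteq> V \<Longrightarrow> f \<in> DSum \<pi> V \<Longrightarrow> (\<lambda>s. if s \<in> F then f s else 0) \<in> DSum \<pi> V"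
  unfolding DSum_def using Pmod_zero by auto

lemma part3_onlyif:
  assumes a: "a \<noteq> 0" and l: "l \<in> Rd 1" "E i * l = l"
    and ft: "factors_through \<pi> (\<lambda>x. (cs a * E i + l) * W i j * x) j i V"
  shows "\<exists>t\<in>V. min (\<phi> j) (\<phi> i) \<le> \<phi> t \<and> \<phi> t \<le> max (\<phi> j) (\<phi> i)"
proof (rule ccontr)
  assume nt: "\<not> ?thesis"
  obtain h :: "'a \<Rightarrow> 'v \<Rightarrow> 'a" and g :: "('v \<Rightarrow> 'a) \<Rightarrow> 'a" where
    h1: "\<forall>x \<in> Pmod \<pi> j. h x \<in> DSum \<pi> V" and
    h3: "\<forall>x \<in> Pmod \<pi> j. \<forall>c. h (x * c) = (\<lambda>t. h x t * c)" and
    g4: "\<forall>\<phi> \<in> DSum \<pi> V. g \<phi> \<in> Pmod \<pi> i" and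
    g5: "\<forall>\<phi> \<in> DSum \<pi> V. \<forall>\<psi> \<in> DSum \<pi> V. g (\<lambda>t. \<phi> t + \<psi> t) = g \<phi> + g \<psi>" and
    g6: "\<forall>\<phi> \<in> DSum \<pi> V. \<forall>c. g (\<lambda>t. \<phi> t * c) = g \<phi> * c" and
    g7: "\<forall>x \<in> Pmod \<pi> j. g (h x) = (cs a * E i + l) * W i j * x"
    using ft unfolding factors_through_def by blast
  define Z where "Z = {W i j * r | r. r \<in> Rd 1}"
  have Z0: "0 \<in> Z" unfolding Z_def using Rd_zero by force
  have Zadd: "u \<in> Z \<Longrightarrow> v \<in> Z \<Longrightarrow> u + v \<in> Z" for u v
  proof -
    assume "u \<in> Z" "v \<in> Z"
    then obtain r1 r2 where "r1 \<in> Rd 1" "r2 \<in> Rd 1" "u = W i j * r1" "v = W i j * r2" unfolding Z_def by blast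
    hence "u + v = W i j * (r1 + r2)" "r1 + r2 \<in> Rd 1" using Rd_add by (auto simp: distrib_left)
    thus "u + v \<in> Z" unfolding Z_def by blast
  qed
  have EjP: "E j \<in> Pmod \<pi> j" by (rule Pmod_E)
  define f0 where "f0 = h (E j)"
  have f0D: "f0 \<in> DSum \<pi> V" unfolding f0_def using h1 EjP by blast
  have gf0: "g f0 = (cs a * E i + l) * W i j" unfolding f0_def using g7 EjP by (simp add: mult.assoc W_E)
  have f0E: "f0 s * E j = f0 s" for s
  proof -
    have "h (E j * E j) = (\<lambda>t. h (E j) t * E j)" using h3 EjP by blast
    hence "h (E j) = (\<lambda>t. h (E j) t * E j)" by (simp only: E_idem)
    hence "h (E j) s = h (E j) s * E j" by (rule fun_cong)
    thus ?thesis unfolding f0_def by simp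
  qed
  have g0: "g (\<lambda>s. 0) = 0"
  proof -
    have "g (\<lambda>t. (\<lambda>s. 0) t + (\<lambda>s. 0) t) = g (\<lambda>s. 0) + g (\<lambda>s. 0)"
      using bspec[OF bspec[OF g5 zero_DSum[of V]] zero_DSum[of V]] .
    thus ?thesis by simp
  qed
  have key: "g (\<lambda>s. if s = t then f0 t else 0) \<in> Z" if tV: "t \<in> V" for t
  proof -
    have outside: "\<not> (min (\<phi> i) (\<phi> j) \<le> \<phi> t \<and> \<phi> t \<le> max (\<phi> i) (\<phi> j))"
      using nt tV by (auto simp: min.commute max.commute)
    define y where "y = f0 t"
    have "y \<in> Pmod \<pi> t" using f0D tV unfolding y_def DSum_def by blast
    then obtain y0 where "y = E t * y0" unfolding Pmod_def by blast
    hence Ety: "E t * y = y" by (simp add: E_idem')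
    have yE: "y * E j = y" unfolding y_def by (rule f0E)
    define eps where "eps = (\<lambda>s. if s = t then E t else (0::'a))"
    have epsD: "eps \<in> DSum \<pi> V" unfolding eps_def using DSum_single[OF tV Pmod_E] .
    have de: "(\<lambda>s. if s = t then f0 t else 0) = (\<lambda>s. eps s * y)"
      unfolding eps_def y_def[symmetric] using Ety by auto
    define u where "u = g eps"
    have gd: "g (\<lambda>s. if s = t then f0 t else 0) = u * y" unfolding de u_def using g6 epsD by blast
    have "u \<in> Pmod \<pi> i" unfolding u_def using g4 epsD by blast
    then obtain u0 where "u = E i * u0" unfolding Pmod_def by blast
    hence Eu: "E i * u = u" by (simp add: E_idem')
    have "eps = (\<lambda>s. eps s * E t)" unfolding eps_def by (rule ext) simp
    moreover have "g (\<lambda>s. eps s * E t) = g eps * E t" using g6 epsD by blast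
    ultimately have uE: "u * E t = u" unfolding u_def by simp
    have "(D i j + D j t = D i t \<and> t \<noteq> j) \<or> (D t i + D i j = D t j \<and> t \<noteq> i)"
      using outside_abs[OF outside] unfolding D_def by auto
    thus ?thesis
    proof
      assume A: "D i j + D j t = D i t \<and> t \<noteq> j"
      have Wit: "W i t = W i j * W j t" using W_split A by blast
      obtain c r r' where f: "r' \<in> Rd 1" "E i * r' * E i = r'" "E i * u * E t = (cs c * E i + r') * W i t"
        using both_forms[where i=i and j=t and y=u] by blast
      obtain r2 where r2: "r2 \<in> Rd 1" "E i * r' * W i j = W i j * r2" using F7a[OF f(1)] by blast
      have Er': "E i * r' = r'" using f(2) by (metis E_idem mult.assoc)
      have "(cs c * E i + r') * W i j = W i j * cs c + W i j * r2"
        using cs_W[of c i j] r2(2) Er' by (simp add: distrib_right)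
      also have "\<dots> = W i j * (cs c + r2)" by (simp add: distrib_left)
      finally have m: "(cs c * E i + r') * W i j = W i j * (cs c + r2)" .
      have "u * y = (E i * u * E t) * y" using Eu uE by simp
      also have "\<dots> = ((cs c * E i + r') * W i j) * (W j t * y)" unfolding f(3) Wit by (simp add: mult.assoc)
      also have "\<dots> = W i j * ((cs c + r2) * W j t * y)" unfolding m by (simp add: mult.assoc)
      finally have "u * y = W i j * ((cs c + r2) * W j t * y)" .
      moreover have "(cs c + r2) * W j t * y \<in> Rd 1"
      proof -
        have "j \<noteq> t" using A by auto
        thus ?thesis using Rd_rmult[OF Rd_lmult[OF W_Rd[of j t]]] by blast
      qed
      ultimately show ?thesis unfolding gd Z_def by blast
    next
      assume B: "D t i + D i j = D t j \<and> t \<noteq> i"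
      have Wtj: "W t j = W t i * W i j" using W_split B by blast
      obtain z where z: "E t * y * E j = W t j * z" using F5 by blast
      have yz: "y = W t j * z" using z Ety yE by (simp add: mult.assoc)
      define q where "q = u * W t i"
      have q1: "q \<in> Rd 1" unfolding q_def using Rd_lmult[OF W_Rd] B by blast
      have Eq: "E i * q = q" unfolding q_def using Eu by (simp add: mult.assoc[symmetric])
      obtain r2 where r2: "r2 \<in> Rd 1" "E i * q * W i j = W i j * r2" using F7a[OF q1] by blast
      have "u * y = q * W i j * z" unfolding yz Wtj q_def by (simp add: mult.assoc)
      also have "\<dots> = W i j * (r2 * z)" using r2(2) Eq by (simp add: mult.assoc)
      finally have "u * y = W i j * (r2 * z)" .
      moreover have "r2 * z \<in> Rd 1" using Rd_rmult[OF r2(1)] .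
      ultimately show ?thesis unfolding gd Z_def by blast
    qed
  qed
  have restr: "finite F \<Longrightarrow> F \<subseteq> V \<Longrightarrow> (\<lambda>s. if s \<in> F then f0 s else 0) \<in> DSum \<pi> V \<and> g (\<lambda>s. if s \<in> F then f0 s else 0) \<in> Z" for F
  proof (induction F rule: finite_induct)
    case empty
    have "(\<lambda>s. if s \<in> {} then f0 s else 0) = (\<lambda>s. 0)" by simp
    thus ?case using zero_DSum[of V] g0 Z0 by simp
  next
    case (insert t F)
    have tV: "t \<in> V" using insert.prems by blast
    have IH: "(\<lambda>s. if s \<in> F then f0 s else 0) \<in> DSum \<pi> V" "g (\<lambda>s. if s \<in> F then f0 s else 0) \<in> Z"
      using insert.IH insert.prems by blast+
    have "f0 t \<in> Pmod \<pi> t" using f0D tV unfolding DSum_def by blast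
    hence dD: "(\<lambda>s. if s = t then f0 t else 0) \<in> DSum \<pi> V" using DSum_single[OF tV] by blast
    have e: "(\<lambda>s. if s \<in> insert t F then f0 s else 0) = (\<lambda>s. (if s \<in> F then f0 s else 0) + (if s = t then f0 t else 0))"
      using insert.hyps(2) by auto
    have insD: "(\<lambda>s. if s \<in> insert t F then f0 s else 0) \<in> DSum \<pi> V"
      using DSum_restr[OF insert.prems f0D] .
    have "g (\<lambda>s. if s \<in> insert t F then f0 s else 0) = g (\<lambda>s. if s \<in> F then f0 s else 0) + g (\<lambda>s. if s = t then f0 t else 0)"
      unfolding e using bspec[OF bspec[OF g5 IH(1)] dD] by simp
    thus ?case using insD Zadd[OF IH(2) key[OF tV]] by simp
  qed
  have "(\<lambda>s. if s \<in> V then f0 s else 0) = f0" using f0D unfolding DSum_def by auto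
  hence "g f0 \<in> Z" using restr[of V] by simp
  then obtain r0 where r0: "r0 \<in> Rd 1" "(cs a * E i + l) * W i j = W i j * r0" unfolding Z_def gf0 by blast
  obtain r1 where r1: "r1 \<in> Rd 1" "E i * l * W i j = W i j * r1" using F7a[OF l(1)] by blast
  have "(cs a * E i + l) * W i j = W i j * cs a + W i j * r1" using cs_W[of a i j] r1(2) l(2) by (simp add: distrib_right)
  hence "W i j * cs a = W i j * (r0 - r1)" using r0(2) by (simp add: right_diff_distrib)
  hence "W i j * cs a * cs (inverse a) = W i j * (r0 - r1) * cs (inverse a)" by simp
  hence "W i j = W i j * ((r0 - r1) * cs (inverse a))" using a by (simp add: mult.assoc cs_mult cs_one)
  moreover have "(r0 - r1) * cs (inverse a) \<in> Rd 1" using Rd_rmult[OF Rd_diff[OF r0(1) r1(1)]] .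
  ultimately have "W i j = 0" using nil_right by blast
  thus False using W_ne by blast
qed

end



theorem lemma4p3:
  fixes src tgt :: "'e::finite \<Rightarrow> 'v::finite"
    and \<pi> :: "(('v, 'e) qpath \<Rightarrow> 'k::field) \<Rightarrow> 'a::ring_1"
  assumes "alg_closed TYPE('k)"
    and "bound_quiver_alg src tgt \<pi>"
    and "cond_C src tgt \<pi>"
  shows "(\<forall>\<alpha>. src \<alpha> \<noteq> tgt \<alpha> \<longrightarrow>
           {ev \<pi> (src \<alpha>) * r * arr src \<pi> \<alpha> | r. r \<in> jac_rad} =
           {arr src \<pi> \<alpha> * r * ev \<pi> (tgt \<alpha>) | r. r \<in> jac_rad}) \<and>
         (\<forall>i j w. w \<in> {ev \<pi> i * x * ev \<pi> j | x. True} \<longrightarrow>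
           (\<exists>a. (\<exists>l \<in> {ev \<pi> i * r * ev \<pi> i | r. r \<in> jac_rad}.
                    w = (csc \<pi> a * ev \<pi> i + l) * wpath src tgt \<pi> i j) \<and>
                (\<exists>l' \<in> {ev \<pi> j * r * ev \<pi> j | r. r \<in> jac_rad}.
                    w = wpath src tgt \<pi> i j * (csc \<pi> a * ev \<pi> j + l')) \<and>
                (\<forall>b. (\<exists>l \<in> {ev \<pi> i * r * ev \<pi> i | r. r \<in> jac_rad}.
                    w = (csc \<pi> b * ev \<pi> i + l) * wpath src tgt \<pi> i j) \<longrightarrow> b = a) \<and>
                (\<forall>b. (\<exists>l' \<in> {ev \<pi> j * r * ev \<pi> j | r. r \<in> jac_rad}.
                    w = wpath src tgt \<pi> i j * (csc \<pi> b * ev \<pi> j + l')) \<longrightarrow> b = a))) \<and>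
         (\<forall>i j a l V. a \<noteq> 0 \<longrightarrow> l \<in> {ev \<pi> i * r * ev \<pi> i | r. r \<in> jac_rad} \<longrightarrow>
           (factors_through \<pi> (\<lambda>x. (csc \<pi> a * ev \<pi> i + l) * wpath src tgt \<pi> i j * x) j i V
            \<longleftrightarrow> (\<exists>t \<in> V. t \<in> pverts tgt (shortest_path src tgt j i))))"
proof -
  obtain \<phi> :: "'v \<Rightarrow> nat" where phi1: "bij_betw \<phi> UNIV {1..card (UNIV :: 'v set)}"
    and phi2: "bij_betw (\<lambda>x. (\<phi> (src x), \<phi> (tgt x))) {x. src x \<noteq> tgt x}
          {(a, b). (1 \<le> a \<and> b = a + 1 \<and> b \<le> card (UNIV :: 'v set)) \<or> (1 \<le> b \<and> a = b + 1 \<and> a \<le> card (UNIV :: 'v set))}"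
    using assms(3) unfolding cond_C_def by blast
  have b: "\<forall>x. src x \<noteq> tgt x \<longrightarrow>
        {arr src \<pi> x * l * ev \<pi> (tgt x) | l. True} = {ev \<pi> (src x) * l * ev \<pi> (tgt x) | l. True} \<and>
        {ev \<pi> (src x) * l * ev \<pi> (tgt x) | l. True} = {ev \<pi> (src x) * l * arr src \<pi> x | l. True}"
    and c: "\<forall>i j. wpath src tgt \<pi> i j \<noteq> 0"
    using assms(3) unfolding cond_C_def by blast+
  interpret QC src tgt \<pi> \<phi>
    by unfold_locales (use assms(2) phi1 phi2 b c in blast)+
  have J: "(jac_rad :: 'a set) = Rd 1" by (rule jac_eq)
  have P1: "\<forall>\<alpha>. src \<alpha> \<noteq> tgt \<alpha> \<longrightarrow>
           {E (src \<alpha>) * r * A \<alpha> | r. r \<in> jac_rad} = {A \<alpha> * r * E (tgt \<alpha>) | r. r \<in> jac_rad}"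
  proof (intro allI impI)
    fix \<alpha> assume ne: "src \<alpha> \<noteq> tgt \<alpha>"
    show "{E (src \<alpha>) * r * A \<alpha> | r. r \<in> jac_rad} = {A \<alpha> * r * E (tgt \<alpha>) | r. r \<in> jac_rad}"
      unfolding J
    proof (intro set_eqI iffI)
      fix z assume "z \<in> {E (src \<alpha>) * r * A \<alpha> | r. r \<in> Rd 1}"
      then obtain r where "r \<in> Rd 1" "z = E (src \<alpha>) * r * A \<alpha>" by blast
      thus "z \<in> {A \<alpha> * r * E (tgt \<alpha>) | r. r \<in> Rd 1}" using part1a[OF ne] by blast
    next
      fix z assume "z \<in> {A \<alpha> * r * E (tgt \<alpha>) | r. r \<in> Rd 1}"
      then obtain r where "r \<in> Rd 1" "z = A \<alpha> * r * E (tgt \<alpha>)" by blast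
      thus "z \<in> {E (src \<alpha>) * r * A \<alpha> | r. r \<in> Rd 1}" using part1b[OF ne] by blast
    qed
  qed
  have inRd: "l \<in> {E v * r * E v | r. r \<in> jac_rad} \<Longrightarrow> l \<in> Rd 1 \<and> E v * l = l" for l v
  proof -
    assume "l \<in> {E v * r * E v | r. r \<in> jac_rad}"
    then obtain r where r: "r \<in> Rd 1" "l = E v * r * E v" unfolding J by blast
    have "l \<in> Rd 1" using r Rd_lmult Rd_rmult by blast
    moreover have "E v * l = l" unfolding r(2) by (simp add: mult.assoc E_idem')
    ultimately show ?thesis by blast
  qed
  have P2: "\<forall>i j w. w \<in> {E i * x * E j | x. True} \<longrightarrow>
           (\<exists>a. (\<exists>l \<in> {E i * r * E i | r. r \<in> jac_rad}. w = (cs a * E i + l) * W i j) \<and>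
                (\<exists>l' \<in> {E j * r * E j | r. r \<in> jac_rad}. w = W i j * (cs a * E j + l')) \<and>
                (\<forall>b. (\<exists>l \<in> {E i * r * E i | r. r \<in> jac_rad}. w = (cs b * E i + l) * W i j) \<longrightarrow> b = a) \<and>
                (\<forall>b. (\<exists>l' \<in> {E j * r * E j | r. r \<in> jac_rad}. w = W i j * (cs b * E j + l')) \<longrightarrow> b = a))"
  proof (intro allI impI)
    fix i j w assume "w \<in> {E i * x * E j | x. True}"
    then obtain x where x: "w = E i * x * E j" by blast
    obtain c r r' where f: "r \<in> Rd 1" "E j * r * E j = r" "r' \<in> Rd 1" "E i * r' * E i = r'"
      "E i * x * E j = W i j * (cs c * E j + r)" "E i * x * E j = (cs c * E i + r') * W i j"
      using both_forms[where i=i and j=j and y=x] by blast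
    have l1: "r' \<in> {E i * r * E i | r. r \<in> jac_rad}" unfolding J using f(3,4) by force
    have l2: "r \<in> {E j * r * E j | r. r \<in> jac_rad}" unfolding J using f(1,2) by force
    show "\<exists>a. (\<exists>l \<in> {E i * r * E i | r. r \<in> jac_rad}. w = (cs a * E i + l) * W i j) \<and>
                (\<exists>l' \<in> {E j * r * E j | r. r \<in> jac_rad}. w = W i j * (cs a * E j + l')) \<and>
                (\<forall>b. (\<exists>l \<in> {E i * r * E i | r. r \<in> jac_rad}. w = (cs b * E i + l) * W i j) \<longrightarrow> b = a) \<and>
                (\<forall>b. (\<exists>l' \<in> {E j * r * E j | r. r \<in> jac_rad}. w = W i j * (cs b * E j + l')) \<longrightarrow> b = a)"
    proof (intro exI[of _ c] conjI allI impI)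
      show "\<exists>l \<in> {E i * r * E i | r. r \<in> jac_rad}. w = (cs c * E i + l) * W i j" using l1 f(6) x by blast
      show "\<exists>l' \<in> {E j * r * E j | r. r \<in> jac_rad}. w = W i j * (cs c * E j + l')" using l2 f(5) x by blast
    next
      fix b assume "\<exists>l \<in> {E i * r * E i | r. r \<in> jac_rad}. w = (cs b * E i + l) * W i j"
      then obtain l where l: "l \<in> {E i * r * E i | r. r \<in> jac_rad}" "w = (cs b * E i + l) * W i j" by blast
      show "b = c" using uniq_left[OF conjunct1[OF inRd[OF l(1)]] f(3)] l(2) f(6) x by metis
    next
      fix b assume "\<exists>l' \<in> {E j * r * E j | r. r \<in> jac_rad}. w = W i j * (cs b * E j + l')"
      then obtain l where l: "l \<in> {E j * r * E j | r. r \<in> jac_rad}" "w = W i j * (cs b * E j + l)" by blast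
      show "b = c" using uniq_right[OF conjunct1[OF inRd[OF l(1)]] f(1)] l(2) f(5) x by metis
    qed
  qed
  have P3: "\<forall>i j a l V. a \<noteq> 0 \<longrightarrow> l \<in> {E i * r * E i | r. r \<in> jac_rad} \<longrightarrow>
           (factors_through \<pi> (\<lambda>x. (cs a * E i + l) * W i j * x) j i V
            \<longleftrightarrow> (\<exists>t \<in> V. t \<in> pverts tgt (SP j i)))"
  proof (intro allI impI)
    fix i j :: 'v and a :: 'k and l :: 'a and V :: "'v set" assume a: "a \<noteq> 0" and l: "l \<in> {E i * r * E i | r. r \<in> jac_rad}"
    note lR = inRd[OF l]
    show "factors_through \<pi> (\<lambda>x. (cs a * E i + l) * W i j * x) j i V \<longleftrightarrow> (\<exists>t \<in> V. t \<in> pverts tgt (SP j i))"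
    proof
      assume "factors_through \<pi> (\<lambda>x. (cs a * E i + l) * W i j * x) j i V"
      thus "\<exists>t \<in> V. t \<in> pverts tgt (SP j i)" using part3_onlyif[OF a conjunct1[OF lR] conjunct2[OF lR]]
        unfolding pverts_SP by blast
    next
      assume "\<exists>t \<in> V. t \<in> pverts tgt (SP j i)"
      then obtain t where "t \<in> V" "min (\<phi> j) (\<phi> i) \<le> \<phi> t" "\<phi> t \<le> max (\<phi> j) (\<phi> i)"
        unfolding pverts_SP by blast
      thus "factors_through \<pi> (\<lambda>x. (cs a * E i + l) * W i j * x) j i V"
        using part3_if conjunct2[OF lR] by blast
    qed
  qed
  show ?thesis using P1 P2 P3 by blast
qed



end
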